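(* Consider a sequence of data-generating processes indexed by $m=1,2,\dots$ with $K_m\to\infty$ cells and a fixed scalar $\beta$. In cell $a\in\{1,\dots,K_m\}$ and fold $v\in\{0,1\}$ the fold-level means satisfy $\bar S_{a,v,m}=\pi_{a,m}+\bar\eta_{a,v,m}$ and $\bar Y_{a,v,m}=\beta\,\bar S_{a,v,m}+\bar\epsilon_{a,v,m}$, where for each $m$ the pairs $(\bar\eta_{a,v,m},\bar\epsilon_{a,v,m})$, $a\le K_m$, $v\in\{0,1\}$, are i.i.d. with mean zero (the two components of a pair may be correlated), $\sigma^2_{\bar\eta,m}=E\bar\eta_{a,v,m}^2>0$ and $\sigma^2_{\bar\epsilon,m}=E\bar\epsilon_{a,v,m}^2>0$. Let $\widehat\beta_m=\big(\sum_{a=1}^{K_m}\bar S_{a,0,m}\bar S_{a,1,m}\big)^{-1}\sum_{a=1}^{K_m}\bar S_{a,0,m}\bar Y_{a,1,m}$. Assume: (a) $\frac{\sum_{a=1}^{K_m}\pi_{a,m}^2}{K_m\sigma^2_{\bar\eta,m}}\to0$, $\frac{\sigma_{\bar\epsilon,m}}{\sigma_{\bar\eta,m}}\to c\in[0,\infty)$, and $\frac{\sum_{a=1}^{K_m}\pi_{a,m}^2}{\sqrt{K_m}\,\sigma^2_{\bar\eta,m}}\to\infty$; (b) (Lindeberg) for every $\epsilon>0$, $E\Big[\Big(\frac{\bar\eta_{1,0,m}\bar\epsilon_{1,1,m}}{\sigma_{\bar\eta,m}\sigma_{\bar\epsilon,m}}\Big)^2\mathbf 1\Big\{\Big|\frac{\bar\eta_{1,0,m}\bar\epsilon_{1,1,m}}{\sigma_{\bar\eta,m}\sigma_{\bar\epsilon,m}}\Big|\ge\epsilon\sqrt{K_m}\Big\}\Big]\to0$.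 Let $\widehat\sigma_{\bar\eta,m},\widehat\sigma_{\bar\epsilon,m}$ satisfy $\widehat\sigma_{\bar\eta,m}/\sigma_{\bar\eta,m}\to1$ and $\widehat\sigma_{\bar\epsilon,m}/\sigma_{\bar\epsilon,m}\to1$ in probability, let $\alpha\in(0,1)$, $q_{1-\alpha/2}$ the $1-\alpha/2$ quantile of the standard normal distribution, and $\mathcal C_m=\Big[\widehat\beta_m\pm q_{1-\alpha/2}\Big(\frac{\sum_{a=1}^{K_m}\bar S_{a,0,m}\bar S_{a,1,m}}{\sqrt{K_m}}\Big)^{-1}\widehat\sigma_{\bar\eta,m}\widehat\sigma_{\bar\epsilon,m}\Big]$. Then $\Pr_m[\beta\in\mathcal C_m]\to1-\alpha$ and $\widehat\beta_m\to\beta$ in probability.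
   Context: This is the two-fold jackknife instrumental variable estimator in a linear model with one endogenous variable: units in each cell are split into two folds of equal size, $\bar S_{a,v,m}$ and $\bar Y_{a,v,m}$ are the averages of the short-term metric and long-term outcome over the units of cell $a$ in fold $v$, $\pi_{a,m}$ is the (nonrandom) first-stage effect of cell $a$ under the $m$-th process, and $\bar\eta_{a,v,m},\bar\epsilon_{a,v,m}$ are the corresponding fold-level error averages (homoskedastic, i.i.d. across cells and folds since unit-level errors are i.i.d.). *)

theory Defs
  imports "HOL-Probability.Probability"
begin

definition std_normal_cdf :: "real \<Rightarrow> real" where
  "std_normal_cdf x = measure (density lborel std_normal_density) {..x}"

definition conv_in_prob :: "(nat \<Rightarrow> 'w measure) \<Rightarrow> (nat \<Rightarrow> 'w \<Rightarrow> real) \<Rightarrow> real \<Rightarrow> bool" where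
  "conv_in_prob M X c \<longleftrightarrow>
     (\<forall>e>0. (\<lambda>m. measure (M m) {\<omega> \<in> space (M m). \<bar>X m \<omega> - c\<bar> > e}) \<longlonglongrightarrow> 0)"

definition Sbar :: "(nat \<Rightarrow> nat \<Rightarrow> real) \<Rightarrow> (nat \<Rightarrow> nat \<Rightarrow> nat \<Rightarrow> 'w \<Rightarrow> real)
                     \<Rightarrow> nat \<Rightarrow> nat \<Rightarrow> nat \<Rightarrow> 'w \<Rightarrow> real" where
  "Sbar fs eta m a v \<omega> = fs m a + eta m a v \<omega>"

definition Ybar :: "real \<Rightarrow> (nat \<Rightarrow> nat \<Rightarrow> real) \<Rightarrow> (nat \<Rightarrow> nat \<Rightarrow> nat \<Rightarrow> 'w \<Rightarrow> real)
                     \<Rightarrow> (nat \<Rightarrow> nat \<Rightarrow> nat \<Rightarrow> 'w \<Rightarrow> real) \<Rightarrow> nat \<Rightarrow> nat \<Rightarrow> nat \<Rightarrow> 'w \<Rightarrow> real" where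
  "Ybar \<beta> fs eta eps m a v \<omega> = \<beta> * Sbar fs eta m a v \<omega> + eps m a v \<omega>"

definition jive_den :: "(nat \<Rightarrow> nat) \<Rightarrow> (nat \<Rightarrow> nat \<Rightarrow> real) \<Rightarrow> (nat \<Rightarrow> nat \<Rightarrow> nat \<Rightarrow> 'w \<Rightarrow> real)
                         \<Rightarrow> nat \<Rightarrow> 'w \<Rightarrow> real" where
  "jive_den K fs eta m \<omega> = (\<Sum>a = 1..K m. Sbar fs eta m a 0 \<omega> * Sbar fs eta m a 1 \<omega>)"

text \<open>Two-fold jackknife IV estimator (x / 0 = 0 in Isabelle).\<close>
definition beta_hat :: "(nat \<Rightarrow> nat) \<Rightarrow> real \<Rightarrow> (nat \<Rightarrow> nat \<Rightarrow> real) \<Rightarrow> (nat \<Rightarrow> nat \<Rightarrow> nat \<Rightarrow> 'w \<Rightarrow> real)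
                         \<Rightarrow> (nat \<Rightarrow> nat \<Rightarrow> nat \<Rightarrow> 'w \<Rightarrow> real) \<Rightarrow> nat \<Rightarrow> 'w \<Rightarrow> real" where
  "beta_hat K \<beta> fs eta eps m \<omega> =
     (\<Sum>a = 1..K m. Sbar fs eta m a 0 \<omega> * Ybar \<beta> fs eta eps m a 1 \<omega>) / jive_den K fs eta m \<omega>"

definition sig_eta :: "(nat \<Rightarrow> 'w measure) \<Rightarrow> (nat \<Rightarrow> nat \<Rightarrow> nat \<Rightarrow> 'w \<Rightarrow> real) \<Rightarrow> nat \<Rightarrow> real" where
  "sig_eta M eta m = sqrt (LINT \<omega>|M m. (eta m 1 0 \<omega>)\<^sup>2)"

definition sig_eps :: "(nat \<Rightarrow> 'w measure) \<Rightarrow> (nat \<Rightarrow> nat \<Rightarrow> nat \<Rightarrow> 'w \<Rightarrow> real) \<Rightarrow> nat \<Rightarrow> real" where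
  "sig_eps M eps m = sqrt (LINT \<omega>|M m. (eps m 1 0 \<omega>)\<^sup>2)"

text \<open>Event beta in C_m, with C_m = [beta_hat - h, beta_hat + h] read as the closed
  interval of half-width |h|, h = q * (den / sqrt K)^{-1} * sh_eta * sh_eps.\<close>
definition in_CI :: "(nat \<Rightarrow> nat) \<Rightarrow> real \<Rightarrow> (nat \<Rightarrow> nat \<Rightarrow> real) \<Rightarrow> (nat \<Rightarrow> nat \<Rightarrow> nat \<Rightarrow> 'w \<Rightarrow> real)
       \<Rightarrow> (nat \<Rightarrow> nat \<Rightarrow> nat \<Rightarrow> 'w \<Rightarrow> real) \<Rightarrow> (nat \<Rightarrow> 'w \<Rightarrow> real) \<Rightarrow> (nat \<Rightarrow> 'w \<Rightarrow> real)
       \<Rightarrow> real \<Rightarrow> nat \<Rightarrow> 'w \<Rightarrow> bool" where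
  "in_CI K \<beta> fs eta eps sh_eta sh_eps q m \<omega> \<longleftrightarrow>
     \<bar>\<beta> - beta_hat K \<beta> fs eta eps m \<omega>\<bar> \<le>
       \<bar>q * inverse (jive_den K fs eta m \<omega> / sqrt (real (K m))) * sh_eta m \<omega> * sh_eps m \<omega>\<bar>"

end

theory Submission
  imports Defs
begin

lemma fst_borel_rr[measurable]: "(fst :: real \<times> real \<Rightarrow> real) \<in> borel_measurable borel"
  by (metis borel_prod measurable_fst)
lemma snd_borel_rr[measurable]: "(snd :: real \<times> real \<Rightarrow> real) \<in> borel_measurable borel"
  by (metis borel_prod measurable_snd)

context prob_space
begin

lemma pair_group_indep:
  fixes P :: "nat \<times> nat \<Rightarrow> 'a \<Rightarrow> real \<times> real"
    and H :: "nat \<Rightarrow> (real \<times> real) \<Rightarrow> (real \<times> real) \<Rightarrow> real"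
  assumes ind: "indep_vars (\<lambda>_. borel) P ({1..K} \<times> {0,1})"
    and Hm: "\<And>a. (\<lambda>(x,y). H a x y) \<in> borel_measurable (borel \<Otimes>\<^sub>M borel)"
  shows "indep_vars (\<lambda>_. borel) (\<lambda>a \<omega>. H a (P (a,0) \<omega>) (P (a,1) \<omega>)) {1..K}"
proof -
  have r: "indep_vars (\<lambda>a. PiM ({a} \<times> {0,1}) (\<lambda>_. borel)) (\<lambda>a \<omega>. restrict (\<lambda>i. P i \<omega>) ({a} \<times> {0,1})) {1..K}"
    by (rule indep_vars_restrict[OF ind]) (auto simp: disjoint_family_on_def)
  have m: "(\<lambda>g. H a (g (a,0)) (g (a,1))) \<in> borel_measurable (PiM ({a} \<times> {0,1}) (\<lambda>_. borel))" for a
  proof -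
    have "(\<lambda>g. (g (a,0), g (a,1))) \<in> measurable (PiM ({a} \<times> {0,1}) (\<lambda>_. borel)) (borel \<Otimes>\<^sub>M borel)"
      by (intro measurable_Pair measurable_component_singleton) auto
    from measurable_compose[OF this Hm[of a]] show ?thesis by (simp add: comp_def)
  qed
  have "indep_vars (\<lambda>_. borel) (\<lambda>a \<omega>. (\<lambda>g. H a (g (a,0)) (g (a,1))) (restrict (\<lambda>i. P i \<omega>) ({a} \<times> {0,1}))) {1..K}"
    by (rule indep_vars_compose2[OF r m])
  then show ?thesis by simp
qed

lemma pair_within_indep:
  fixes P :: "nat \<times> nat \<Rightarrow> 'a \<Rightarrow> real \<times> real"
  assumes ind: "indep_vars (\<lambda>_. borel) P ({1..K} \<times> {0,1})" and a: "a \<in> {1..K}"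
    and f: "f \<in> borel_measurable borel" and g: "g \<in> borel_measurable borel"
  shows "indep_var borel (\<lambda>\<omega>. f (P (a,0) \<omega>)) borel (\<lambda>\<omega>. g (P (a,1) \<omega>))"
proof -
  have r: "indep_var (PiM {(a,0)} (\<lambda>_. borel)) (\<lambda>\<omega>. restrict (\<lambda>i. P i \<omega>) {(a,0)})
                     (PiM {(a,1)} (\<lambda>_. borel)) (\<lambda>\<omega>. restrict (\<lambda>i. P i \<omega>) {(a,1)})"
    by (rule indep_var_restrict[OF ind]) (use a in auto)
  have m1: "(\<lambda>h. f (h (a,0))) \<in> borel_measurable (PiM {(a,0)} (\<lambda>_. borel))"
    using measurable_compose[OF measurable_component_singleton[of "(a,0)" "{(a,0)}" "\<lambda>_. borel"] f] by (simp add: comp_def)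
  have m2: "(\<lambda>h. g (h (a,1))) \<in> borel_measurable (PiM {(a,1)} (\<lambda>_. borel))"
    using measurable_compose[OF measurable_component_singleton[of "(a,1)" "{(a,1)}" "\<lambda>_. borel"] g] by (simp add: comp_def)
  from indep_var_compose[OF r m1 m2] show ?thesis by (simp add: comp_def)
qed

lemma sum_sq_indep:
  fixes Z :: "nat \<Rightarrow> 'a \<Rightarrow> real"
  assumes fin: "finite A" and ind: "indep_vars (\<lambda>_. borel) Z A"
    and int: "\<And>a. a \<in> A \<Longrightarrow> integrable M (Z a)"
    and mean: "\<And>a. a \<in> A \<Longrightarrow> expectation (Z a) = 0"
    and sq: "\<And>a. a \<in> A \<Longrightarrow> integrable M (\<lambda>\<omega>. (Z a \<omega>)\<^sup>2)"
  shows "integrable M (\<lambda>\<omega>. (\<Sum>a\<in>A. Z a \<omega>)\<^sup>2)"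
    and "expectation (\<lambda>\<omega>. (\<Sum>a\<in>A. Z a \<omega>)\<^sup>2) = (\<Sum>a\<in>A. expectation (\<lambda>\<omega>. (Z a \<omega>)\<^sup>2))"
proof -
  have iv: "indep_var borel (Z a) borel (Z b)" if "a \<in> A" "b \<in> A" "a \<noteq> b" for a b
  proof -
    have "indep_var borel ((\<lambda>f. f a) \<circ> (\<lambda>\<omega>. restrict (\<lambda>i. Z i \<omega>) {a}))
                    borel ((\<lambda>f. f b) \<circ> (\<lambda>\<omega>. restrict (\<lambda>i. Z i \<omega>) {b}))"
      using that by (intro indep_var_compose[OF indep_var_restrict[OF ind]]) auto
    then show ?thesis by (simp add: comp_def)
  qed
  have prodint: "integrable M (\<lambda>\<omega>. Z a \<omega> * Z b \<omega>)" if "a \<in> A" "b \<in> A" for a b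
  proof (cases "a = b")
    case True then show ?thesis using sq[OF that(1)] by (simp add: power2_eq_square)
  next
    case False then show ?thesis using indep_var_integrable[OF iv[OF that False] int int] that by auto
  qed
  have prodexp: "expectation (\<lambda>\<omega>. Z a \<omega> * Z b \<omega>) = (if a = b then expectation (\<lambda>\<omega>. (Z a \<omega>)\<^sup>2) else 0)"
    if "a \<in> A" "b \<in> A" for a b
  proof (cases "a = b")
    case True then show ?thesis by (simp add: power2_eq_square)
  next
    case False then show ?thesis using indep_var_lebesgue_integral[OF iv[OF that False] int int] that mean by auto
  qed
  have eq: "(\<lambda>\<omega>. (\<Sum>a\<in>A. Z a \<omega>)\<^sup>2) = (\<lambda>\<omega>. \<Sum>a\<in>A. \<Sum>b\<in>A. Z a \<omega> * Z b \<omega>)"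
    by (simp add: power2_eq_square sum_product)
  show "integrable M (\<lambda>\<omega>. (\<Sum>a\<in>A. Z a \<omega>)\<^sup>2)"
    unfolding eq using prodint by (intro Bochner_Integration.integrable_sum) auto
  have "expectation (\<lambda>\<omega>. (\<Sum>a\<in>A. Z a \<omega>)\<^sup>2) = (\<Sum>a\<in>A. \<Sum>b\<in>A. expectation (\<lambda>\<omega>. Z a \<omega> * Z b \<omega>))"
    unfolding eq using prodint by (simp add: Bochner_Integration.integrable_sum Bochner_Integration.integral_sum)
  also have "\<dots> = (\<Sum>a\<in>A. \<Sum>b\<in>A. (if a = b then expectation (\<lambda>\<omega>. (Z a \<omega>)\<^sup>2) else 0))"
    using prodexp by (intro sum.cong) auto
  also have "\<dots> = (\<Sum>a\<in>A. expectation (\<lambda>\<omega>. (Z a \<omega>)\<^sup>2))"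
    using fin by (simp add: sum.delta)
  finally show "expectation (\<lambda>\<omega>. (\<Sum>a\<in>A. Z a \<omega>)\<^sup>2) = (\<Sum>a\<in>A. expectation (\<lambda>\<omega>. (Z a \<omega>)\<^sup>2))" .
qed

lemma cheb0:
  fixes X :: "'a \<Rightarrow> real"
  assumes [measurable]: "X \<in> borel_measurable M" and "integrable M (\<lambda>\<omega>. (X \<omega>)\<^sup>2)" and t: "t > 0"
  shows "prob {\<omega> \<in> space M. \<bar>X \<omega>\<bar> \<ge> t} \<le> expectation (\<lambda>\<omega>. (X \<omega>)\<^sup>2) / t\<^sup>2"
proof -
  have "{\<omega> \<in> space M. \<bar>X \<omega>\<bar> \<ge> t} = {\<omega> \<in> space M. (X \<omega>)\<^sup>2 \<ge> t\<^sup>2}"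
    using t by (auto simp: abs_le_square_iff[symmetric] abs_of_pos)
  also have "prob \<dots> \<le> expectation (\<lambda>\<omega>. (X \<omega>)\<^sup>2) / t\<^sup>2"
    by (rule integral_Markov_inequality_measure[where A="space M"]) (use assms in auto)
  finally show ?thesis .
qed

end

locale jrow = prob_space +
  fixes K :: nat and eta eps :: "nat \<Rightarrow> nat \<Rightarrow> 'a \<Rightarrow> real"
  assumes K1: "1 \<le> K"
    and meta: "\<And>a v. a \<in> {1..K} \<Longrightarrow> v \<in> {0,1} \<Longrightarrow> eta a v \<in> borel_measurable M"
    and meps: "\<And>a v. a \<in> {1..K} \<Longrightarrow> v \<in> {0,1} \<Longrightarrow> eps a v \<in> borel_measurable M"
    and ind: "indep_vars (\<lambda>_. borel) (\<lambda>(a,v) \<omega>. (eta a v \<omega>, eps a v \<omega>)) ({1..K} \<times> {0,1})"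
    and ident: "\<And>a v. a \<in> {1..K} \<Longrightarrow> v \<in> {0,1} \<Longrightarrow>
                   distr M borel (\<lambda>\<omega>. (eta a v \<omega>, eps a v \<omega>))
                 = distr M borel (\<lambda>\<omega>. (eta 1 0 \<omega>, eps 1 0 \<omega>))"
    and ieta: "\<And>a v. a \<in> {1..K} \<Longrightarrow> v \<in> {0,1} \<Longrightarrow> integrable M (eta a v)"
    and ieps: "\<And>a v. a \<in> {1..K} \<Longrightarrow> v \<in> {0,1} \<Longrightarrow> integrable M (eps a v)"
    and mean_eta: "\<And>a v. a \<in> {1..K} \<Longrightarrow> v \<in> {0,1} \<Longrightarrow> expectation (eta a v) = 0"
    and mean_eps: "\<And>a v. a \<in> {1..K} \<Longrightarrow> v \<in> {0,1} \<Longrightarrow> expectation (eps a v) = 0"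
    and sq_eta: "\<And>a v. a \<in> {1..K} \<Longrightarrow> v \<in> {0,1} \<Longrightarrow> integrable M (\<lambda>\<omega>. (eta a v \<omega>)\<^sup>2)"
    and sq_eps: "\<And>a v. a \<in> {1..K} \<Longrightarrow> v \<in> {0,1} \<Longrightarrow> integrable M (\<lambda>\<omega>. (eps a v \<omega>)\<^sup>2)"
    and v1pos: "expectation (\<lambda>\<omega>. (eta 1 0 \<omega>)\<^sup>2) > 0"
    and v2pos: "expectation (\<lambda>\<omega>. (eps 1 0 \<omega>)\<^sup>2) > 0"
begin

definition "v1 = expectation (\<lambda>\<omega>. (eta 1 0 \<omega>)\<^sup>2)"
definition "v2 = expectation (\<lambda>\<omega>. (eps 1 0 \<omega>)\<^sup>2)"

abbreviation "P \<equiv> (\<lambda>(a,v) \<omega>. (eta a v \<omega>, eps a v \<omega>))"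

lemma P_meas: "a \<in> {1..K} \<Longrightarrow> v \<in> {0,1} \<Longrightarrow> (\<lambda>\<omega>. (eta a v \<omega>, eps a v \<omega>)) \<in> borel_measurable M"
  using meta meps by (auto intro!: borel_measurable_Pair)

lemma ident_int:
  fixes f :: "real \<times> real \<Rightarrow> real"
  assumes a: "a \<in> {1..K}" "v \<in> {0,1}" and f[measurable]: "f \<in> borel_measurable borel"
  shows "integrable M (\<lambda>\<omega>. f (eta a v \<omega>, eps a v \<omega>)) \<longleftrightarrow> integrable M (\<lambda>\<omega>. f (eta 1 0 \<omega>, eps 1 0 \<omega>))"
    and "expectation (\<lambda>\<omega>. f (eta a v \<omega>, eps a v \<omega>)) = expectation (\<lambda>\<omega>. f (eta 1 0 \<omega>, eps 1 0 \<omega>))"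
proof -
  have m1[measurable]: "(\<lambda>\<omega>. (eta a v \<omega>, eps a v \<omega>)) \<in> borel_measurable M" using P_meas a by auto
  have m2[measurable]: "(\<lambda>\<omega>. (eta 1 0 \<omega>, eps 1 0 \<omega>)) \<in> borel_measurable M" using P_meas K1 by auto
  show "integrable M (\<lambda>\<omega>. f (eta a v \<omega>, eps a v \<omega>)) \<longleftrightarrow> integrable M (\<lambda>\<omega>. f (eta 1 0 \<omega>, eps 1 0 \<omega>))"
    using integrable_distr_eq[OF m1 f, symmetric] integrable_distr_eq[OF m2 f, symmetric] ident[OF a] by simp
  show "expectation (\<lambda>\<omega>. f (eta a v \<omega>, eps a v \<omega>)) = expectation (\<lambda>\<omega>. f (eta 1 0 \<omega>, eps 1 0 \<omega>))"
    using integral_distr[OF m1 f, symmetric] integral_distr[OF m2 f, symmetric] ident[OF a] by simp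
qed

lemma var_eta: "a \<in> {1..K} \<Longrightarrow> v \<in> {0,1} \<Longrightarrow> expectation (\<lambda>\<omega>. (eta a v \<omega>)\<^sup>2) = v1"
proof -
  have "(\<lambda>x::real\<times>real. (fst x)\<^sup>2) \<in> borel_measurable borel" by measurable
  then show "a \<in> {1..K} \<Longrightarrow> v \<in> {0,1} \<Longrightarrow> ?thesis"
    using ident_int(2)[of a v "\<lambda>x. (fst x)\<^sup>2"] unfolding v1_def by simp
qed

lemma var_eps: "a \<in> {1..K} \<Longrightarrow> v \<in> {0,1} \<Longrightarrow> expectation (\<lambda>\<omega>. (eps a v \<omega>)\<^sup>2) = v2"
proof -
  have "(\<lambda>x::real\<times>real. (snd x)\<^sup>2) \<in> borel_measurable borel" by measurable
  then show "a \<in> {1..K} \<Longrightarrow> v \<in> {0,1} \<Longrightarrow> ?thesis"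
    using ident_int(2)[of a v "\<lambda>x. (snd x)\<^sup>2"] unfolding v2_def by simp
qed

lemma within:
  assumes a: "a \<in> {1..K}" and f: "f \<in> borel_measurable borel" and g: "g \<in> borel_measurable borel"
  shows "indep_var borel (\<lambda>\<omega>. f (eta a 0 \<omega>, eps a 0 \<omega>)) borel (\<lambda>\<omega>. g (eta a 1 \<omega>, eps a 1 \<omega>))"
  using pair_within_indep[OF ind a f g] by simp

lemma group:
  fixes H :: "nat \<Rightarrow> (real \<times> real) \<Rightarrow> (real \<times> real) \<Rightarrow> real"
  assumes Hm: "\<And>a. (\<lambda>(x,y). H a x y) \<in> borel_measurable (borel \<Otimes>\<^sub>M borel)"
  shows "indep_vars (\<lambda>_. borel) (\<lambda>a \<omega>. H a (eta a 0 \<omega>, eps a 0 \<omega>) (eta a 1 \<omega>, eps a 1 \<omega>)) {1..K}"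
  using pair_group_indep[OF ind Hm] by simp

lemma mom_prod:
  fixes f g :: "real \<times> real \<Rightarrow> real"
  assumes a: "a \<in> {1..K}" and f[measurable]: "f \<in> borel_measurable borel" and g[measurable]: "g \<in> borel_measurable borel"
    and fi: "integrable M (\<lambda>\<omega>. f (eta a 0 \<omega>, eps a 0 \<omega>))" and gi: "integrable M (\<lambda>\<omega>. g (eta a 1 \<omega>, eps a 1 \<omega>))"
  shows "integrable M (\<lambda>\<omega>. f (eta a 0 \<omega>, eps a 0 \<omega>) * g (eta a 1 \<omega>, eps a 1 \<omega>))"
    and "expectation (\<lambda>\<omega>. f (eta a 0 \<omega>, eps a 0 \<omega>) * g (eta a 1 \<omega>, eps a 1 \<omega>)) =
         expectation (\<lambda>\<omega>. f (eta a 0 \<omega>, eps a 0 \<omega>)) * expectation (\<lambda>\<omega>. g (eta a 1 \<omega>, eps a 1 \<omega>))"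
  using indep_var_integrable[OF within[OF a f g] fi gi] indep_var_lebesgue_integral[OF within[OF a f g] fi gi]
  by auto

lemma mom_ee:
  assumes a: "a \<in> {1..K}"
  shows "integrable M (\<lambda>\<omega>. eta a 0 \<omega> * eps a 1 \<omega>)" "expectation (\<lambda>\<omega>. eta a 0 \<omega> * eps a 1 \<omega>) = 0"
    "integrable M (\<lambda>\<omega>. (eta a 0 \<omega> * eps a 1 \<omega>)\<^sup>2)" "expectation (\<lambda>\<omega>. (eta a 0 \<omega> * eps a 1 \<omega>)\<^sup>2) = v1 * v2"
  using mom_prod[OF a, of fst snd] mom_prod[OF a, of "\<lambda>x. (fst x)\<^sup>2" "\<lambda>x. (snd x)\<^sup>2"] a
    ieta[of a 0] ieps[of a 1] sq_eta[of a 0] sq_eps[of a 1] mean_eta[of a 0] mean_eps[of a 1] var_eta[of a 0] var_eps[of a 1]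
  by (auto simp: power_mult_distrib)

lemma mom_hh:
  assumes a: "a \<in> {1..K}"
  shows "integrable M (\<lambda>\<omega>. eta a 0 \<omega> * eta a 1 \<omega>)" "expectation (\<lambda>\<omega>. eta a 0 \<omega> * eta a 1 \<omega>) = 0"
    "integrable M (\<lambda>\<omega>. (eta a 0 \<omega> * eta a 1 \<omega>)\<^sup>2)" "expectation (\<lambda>\<omega>. (eta a 0 \<omega> * eta a 1 \<omega>)\<^sup>2) = v1 * v1"
  using mom_prod[OF a, of fst fst] mom_prod[OF a, of "\<lambda>x. (fst x)\<^sup>2" "\<lambda>x. (fst x)\<^sup>2"] a
    ieta[of a 0] ieta[of a 1] sq_eta[of a 0] sq_eta[of a 1] mean_eta[of a 0] mean_eta[of a 1] var_eta[of a 0] var_eta[of a 1]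
  by (auto simp: power_mult_distrib)

lemma mom_sum:
  assumes a: "a \<in> {1..K}"
  shows "integrable M (\<lambda>\<omega>. (eta a 0 \<omega> + eta a 1 \<omega>)\<^sup>2)" "expectation (\<lambda>\<omega>. (eta a 0 \<omega> + eta a 1 \<omega>)\<^sup>2) = 2 * v1"
proof -
  have e: "(\<lambda>\<omega>. (eta a 0 \<omega> + eta a 1 \<omega>)\<^sup>2) = (\<lambda>\<omega>. (eta a 0 \<omega>)\<^sup>2 + 2 * (eta a 0 \<omega> * eta a 1 \<omega>) + (eta a 1 \<omega>)\<^sup>2)"
    by (auto simp: power2_eq_square algebra_simps)
  show "integrable M (\<lambda>\<omega>. (eta a 0 \<omega> + eta a 1 \<omega>)\<^sup>2)"
    unfolding e using mom_hh[OF a] sq_eta[of a 0] sq_eta[of a 1] a by auto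
  show "expectation (\<lambda>\<omega>. (eta a 0 \<omega> + eta a 1 \<omega>)\<^sup>2) = 2 * v1"
    unfolding e using mom_hh[OF a] sq_eta[of a 0] sq_eta[of a 1] a var_eta[of a 0] var_eta[of a 1] by auto
qed

lemma sumA:
  fixes fs :: "nat \<Rightarrow> real"
  shows "integrable M (\<lambda>\<omega>. (\<Sum>a=1..K. fs a * eps a 1 \<omega>)\<^sup>2)"
    "expectation (\<lambda>\<omega>. (\<Sum>a=1..K. fs a * eps a 1 \<omega>)\<^sup>2) = (\<Sum>a=1..K. (fs a)\<^sup>2) * v2"
proof -
  have i: "indep_vars (\<lambda>_. borel) (\<lambda>a \<omega>. fs a * eps a 1 \<omega>) {1..K}"
    using group[of "\<lambda>a x y. fs a * snd y"] by simp
  note s = sum_sq_indep[OF _ i]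
  have *: "expectation (\<lambda>\<omega>. (fs a * eps a 1 \<omega>)\<^sup>2) = (fs a)\<^sup>2 * v2" if "a \<in> {1..K}" for a
    using var_eps[of a 1] sq_eps[of a 1] that by (simp add: power_mult_distrib)
  show "integrable M (\<lambda>\<omega>. (\<Sum>a=1..K. fs a * eps a 1 \<omega>)\<^sup>2)"
    by (rule s) (use ieps mean_eps sq_eps in \<open>auto simp: power_mult_distrib\<close>)
  have "expectation (\<lambda>\<omega>. (\<Sum>a=1..K. fs a * eps a 1 \<omega>)\<^sup>2) = (\<Sum>a=1..K. expectation (\<lambda>\<omega>. (fs a * eps a 1 \<omega>)\<^sup>2))"
    by (rule s) (use ieps mean_eps sq_eps in \<open>auto simp: power_mult_distrib\<close>)
  also have "\<dots> = (\<Sum>a=1..K. (fs a)\<^sup>2 * v2)" using * by (intro sum.cong) auto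
  finally show "expectation (\<lambda>\<omega>. (\<Sum>a=1..K. fs a * eps a 1 \<omega>)\<^sup>2) = (\<Sum>a=1..K. (fs a)\<^sup>2) * v2"
    by (simp add: sum_distrib_right)
qed

lemma sumC:
  fixes fs :: "nat \<Rightarrow> real"
  shows "integrable M (\<lambda>\<omega>. (\<Sum>a=1..K. fs a * (eta a 0 \<omega> + eta a 1 \<omega>))\<^sup>2)"
    "expectation (\<lambda>\<omega>. (\<Sum>a=1..K. fs a * (eta a 0 \<omega> + eta a 1 \<omega>))\<^sup>2) = (\<Sum>a=1..K. (fs a)\<^sup>2) * (2 * v1)"
proof -
  have i: "indep_vars (\<lambda>_. borel) (\<lambda>a \<omega>. fs a * (eta a 0 \<omega> + eta a 1 \<omega>)) {1..K}"
    using group[of "\<lambda>a x y. fs a * (fst x + fst y)"] by simp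
  note s = sum_sq_indep[OF _ i]
  have *: "expectation (\<lambda>\<omega>. (fs a * (eta a 0 \<omega> + eta a 1 \<omega>))\<^sup>2) = (fs a)\<^sup>2 * (2 * v1)" if "a \<in> {1..K}" for a
    using mom_sum[OF that] by (simp add: power_mult_distrib)
  have h: "a \<in> {1..K} \<Longrightarrow> integrable M (\<lambda>\<omega>. fs a * (eta a 0 \<omega> + eta a 1 \<omega>))" 
    "a \<in> {1..K} \<Longrightarrow> expectation (\<lambda>\<omega>. fs a * (eta a 0 \<omega> + eta a 1 \<omega>)) = 0"
    "a \<in> {1..K} \<Longrightarrow> integrable M (\<lambda>\<omega>. (fs a * (eta a 0 \<omega> + eta a 1 \<omega>))\<^sup>2)" for a
    using ieta[of a 0] ieta[of a 1] mean_eta[of a 0] mean_eta[of a 1] mom_sum[of a] by (auto simp: power_mult_distrib)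
  show "integrable M (\<lambda>\<omega>. (\<Sum>a=1..K. fs a * (eta a 0 \<omega> + eta a 1 \<omega>))\<^sup>2)"
    by (rule s) (use h in auto)
  have "expectation (\<lambda>\<omega>. (\<Sum>a=1..K. fs a * (eta a 0 \<omega> + eta a 1 \<omega>))\<^sup>2) = (\<Sum>a=1..K. expectation (\<lambda>\<omega>. (fs a * (eta a 0 \<omega> + eta a 1 \<omega>))\<^sup>2))"
    by (rule s) (use h in auto)
  also have "\<dots> = (\<Sum>a=1..K. (fs a)\<^sup>2 * (2 * v1))" using * by (intro sum.cong) auto
  finally show "expectation (\<lambda>\<omega>. (\<Sum>a=1..K. fs a * (eta a 0 \<omega> + eta a 1 \<omega>))\<^sup>2) = (\<Sum>a=1..K. (fs a)\<^sup>2) * (2 * v1)"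
    by (simp add: sum_distrib_right)
qed

lemma sumB:
  shows "integrable M (\<lambda>\<omega>. (\<Sum>a=1..K. eta a 0 \<omega> * eps a 1 \<omega>)\<^sup>2)"
    "expectation (\<lambda>\<omega>. (\<Sum>a=1..K. eta a 0 \<omega> * eps a 1 \<omega>)\<^sup>2) = K * (v1 * v2)"
proof -
  have i: "indep_vars (\<lambda>_. borel) (\<lambda>a \<omega>. eta a 0 \<omega> * eps a 1 \<omega>) {1..K}"
    using group[of "\<lambda>a x y. fst x * snd y"] by simp
  note s = sum_sq_indep[OF _ i]
  show "integrable M (\<lambda>\<omega>. (\<Sum>a=1..K. eta a 0 \<omega> * eps a 1 \<omega>)\<^sup>2)"
    by (rule s) (use mom_ee in auto)
  have "expectation (\<lambda>\<omega>. (\<Sum>a=1..K. eta a 0 \<omega> * eps a 1 \<omega>)\<^sup>2) = (\<Sum>a=1..K. expectation (\<lambda>\<omega>. (eta a 0 \<omega> * eps a 1 \<omega>)\<^sup>2))"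
    by (rule s) (use mom_ee in auto)
  also have "\<dots> = (\<Sum>a=1..K. v1 * v2)" using mom_ee by (intro sum.cong) auto
  finally show "expectation (\<lambda>\<omega>. (\<Sum>a=1..K. eta a 0 \<omega> * eps a 1 \<omega>)\<^sup>2) = K * (v1 * v2)"
    by simp
qed

lemma sumD:
  shows "integrable M (\<lambda>\<omega>. (\<Sum>a=1..K. eta a 0 \<omega> * eta a 1 \<omega>)\<^sup>2)"
    "expectation (\<lambda>\<omega>. (\<Sum>a=1..K. eta a 0 \<omega> * eta a 1 \<omega>)\<^sup>2) = K * (v1 * v1)"
proof -
  have i: "indep_vars (\<lambda>_. borel) (\<lambda>a \<omega>. eta a 0 \<omega> * eta a 1 \<omega>) {1..K}"
    using group[of "\<lambda>a x y. fst x * fst y"] by simp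
  note s = sum_sq_indep[OF _ i]
  show "integrable M (\<lambda>\<omega>. (\<Sum>a=1..K. eta a 0 \<omega> * eta a 1 \<omega>)\<^sup>2)"
    by (rule s) (use mom_hh in auto)
  have "expectation (\<lambda>\<omega>. (\<Sum>a=1..K. eta a 0 \<omega> * eta a 1 \<omega>)\<^sup>2) = (\<Sum>a=1..K. expectation (\<lambda>\<omega>. (eta a 0 \<omega> * eta a 1 \<omega>)\<^sup>2))"
    by (rule s) (use mom_hh in auto)
  also have "\<dots> = (\<Sum>a=1..K. v1 * v1)" using mom_hh by (intro sum.cong) auto
  finally show "expectation (\<lambda>\<omega>. (\<Sum>a=1..K. eta a 0 \<omega> * eta a 1 \<omega>)\<^sup>2) = K * (v1 * v1)"
    by simp
qed

end

context jrow
begin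

lemma marg_eta: "a \<in> {1..K} \<Longrightarrow> v \<in> {0,1} \<Longrightarrow> distr M borel (eta a v) = distr M borel (eta 1 0)"
proof -
  assume a: "a \<in> {1..K}" "v \<in> {0,1}"
  have m1: "(\<lambda>\<omega>. (eta a v \<omega>, eps a v \<omega>)) \<in> borel_measurable M" using P_meas a by auto
  have m2: "(\<lambda>\<omega>. (eta 1 0 \<omega>, eps 1 0 \<omega>)) \<in> borel_measurable M" using P_meas K1 by auto
  have "distr M borel (eta a v) = distr (distr M borel (\<lambda>\<omega>. (eta a v \<omega>, eps a v \<omega>))) borel fst"
    using distr_distr[OF fst_borel_rr m1] by (simp add: comp_def)
  also have "\<dots> = distr (distr M borel (\<lambda>\<omega>. (eta 1 0 \<omega>, eps 1 0 \<omega>))) borel fst" using ident[OF a] by simp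
  also have "\<dots> = distr M borel (eta 1 0)"
    using distr_distr[OF fst_borel_rr m2] by (simp add: comp_def)
  finally show ?thesis .
qed

lemma marg_eps: "a \<in> {1..K} \<Longrightarrow> v \<in> {0,1} \<Longrightarrow> distr M borel (eps a v) = distr M borel (eps 1 0)"
proof -
  assume a: "a \<in> {1..K}" "v \<in> {0,1}"
  have m1: "(\<lambda>\<omega>. (eta a v \<omega>, eps a v \<omega>)) \<in> borel_measurable M" using P_meas a by auto
  have m2: "(\<lambda>\<omega>. (eta 1 0 \<omega>, eps 1 0 \<omega>)) \<in> borel_measurable M" using P_meas K1 by auto
  have "distr M borel (eps a v) = distr (distr M borel (\<lambda>\<omega>. (eta a v \<omega>, eps a v \<omega>))) borel snd"
    using distr_distr[OF snd_borel_rr m1] by (simp add: comp_def)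
  also have "\<dots> = distr (distr M borel (\<lambda>\<omega>. (eta 1 0 \<omega>, eps 1 0 \<omega>))) borel snd" using ident[OF a] by simp
  also have "\<dots> = distr M borel (eps 1 0)"
    using distr_distr[OF snd_borel_rr m2] by (simp add: comp_def)
  finally show ?thesis .
qed

lemma pair_law:
  assumes a: "a \<in> {1..K}"
  shows "distr M (borel \<Otimes>\<^sub>M borel) (\<lambda>\<omega>. (eta a 0 \<omega>, eps a 1 \<omega>)) = distr M (borel \<Otimes>\<^sub>M borel) (\<lambda>\<omega>. (eta 1 0 \<omega>, eps 1 1 \<omega>))"
proof -
  have a1: "1 \<in> {1..K}" using K1 by auto
  have i1: "indep_var borel (eta a 0) borel (eps a 1)" using within[OF a fst_borel_rr snd_borel_rr] by simp
  have i2: "indep_var borel (eta 1 0) borel (eps 1 1)" using within[OF a1 fst_borel_rr snd_borel_rr] by simp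
  have "distr M (borel \<Otimes>\<^sub>M borel) (\<lambda>\<omega>. (eta a 0 \<omega>, eps a 1 \<omega>)) = distr M borel (eta a 0) \<Otimes>\<^sub>M distr M borel (eps a 1)"
    using i1 unfolding indep_var_distribution_eq by simp
  also have "\<dots> = distr M borel (eta 1 0) \<Otimes>\<^sub>M distr M borel (eps 1 1)"
    using marg_eta[OF a, of 0] marg_eps[OF a, of 1] marg_eps[OF a1, of 1] by simp
  also have "\<dots> = distr M (borel \<Otimes>\<^sub>M borel) (\<lambda>\<omega>. (eta 1 0 \<omega>, eps 1 1 \<omega>))"
    using i2 unfolding indep_var_distribution_eq by simp
  finally show ?thesis .
qed

lemma char_bound:
  fixes t :: real
  defines "W \<equiv> \<lambda>\<omega>. (eta 1 0 \<omega> * eps 1 1 \<omega>) / (sqrt v1 * sqrt v2)"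
  assumes Kt: "real K \<ge> t\<^sup>2 / 4"
  shows "cmod (char (distr M borel (\<lambda>\<omega>. (\<Sum>a=1..K. eta a 0 \<omega> * eps a 1 \<omega>) / (sqrt K * sqrt v1 * sqrt v2))) t
             - (1 + (-(t\<^sup>2) / 2) / K) ^ K)
         \<le> t\<^sup>2 / 6 * expectation (\<lambda>\<omega>. min (6 * (W \<omega>)\<^sup>2) (\<bar>t / sqrt K\<bar> * \<bar>W \<omega>\<bar> ^ 3))"
proof -
  have a1: "1 \<in> {1..K}" using K1 by auto
  have v1: "v1 > 0" and v2: "v2 > 0" using v1pos v2pos unfolding v1_def v2_def by auto
  define c where "c = sqrt v1 * sqrt v2 * sqrt K"
  have c: "c > 0" using K1 v1 v2 by (auto simp: c_def)
  define Y where "Y a \<omega> = eta a 0 \<omega> * eps a 1 \<omega> / c" for a \<omega>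
  have Yi: "indep_vars (\<lambda>_. borel) Y {1..K}"
    using group[of "\<lambda>a x y. fst x * snd y / c"] by (simp add: Y_def[abs_def])
  have m1[measurable]: "(\<lambda>\<omega>. (eta a 0 \<omega>, eps a 1 \<omega>)) \<in> measurable M (borel \<Otimes>\<^sub>M borel)" if "a \<in> {1..K}" for a
    using meta meps that by (auto intro!: measurable_Pair)
  have hm: "(\<lambda>x::real\<times>real. fst x * snd x / c) \<in> borel_measurable (borel \<Otimes>\<^sub>M borel)" by measurable
  have Ylaw: "distr M borel (Y a) = distr M borel (Y 1)" if a: "a \<in> {1..K}" for a
  proof -
    have "distr M borel (Y a) = distr (distr M (borel \<Otimes>\<^sub>M borel) (\<lambda>\<omega>. (eta a 0 \<omega>, eps a 1 \<omega>))) borel (\<lambda>x. fst x * snd x / c)"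
      using distr_distr[OF hm m1[OF a]] by (simp add: comp_def Y_def[abs_def])
    also have "\<dots> = distr (distr M (borel \<Otimes>\<^sub>M borel) (\<lambda>\<omega>. (eta 1 0 \<omega>, eps 1 1 \<omega>))) borel (\<lambda>x. fst x * snd x / c)"
      using pair_law[OF a] by simp
    also have "\<dots> = distr M borel (Y 1)"
      using distr_distr[OF hm m1[OF a1]] by (simp add: comp_def Y_def[abs_def])
    finally show ?thesis .
  qed
  have Wm[measurable]: "W \<in> borel_measurable M" using meta meps a1 unfolding W_def by auto
  define \<mu> where "\<mu> = distr M borel W"
  interpret \<mu>: real_distribution \<mu> unfolding \<mu>_def by (rule real_distribution_distr) simp
  define u where "u = t / sqrt K"
  have sumeq: "(\<lambda>\<omega>. (\<Sum>a=1..K. eta a 0 \<omega> * eps a 1 \<omega>) / (sqrt K * sqrt v1 * sqrt v2)) = (\<lambda>\<omega>. \<Sum>a\<in>{1..K}. Y a \<omega>)"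
  proof -
    have "sqrt K * sqrt v1 * sqrt v2 = c" by (simp add: c_def mult_ac)
    then show ?thesis by (auto simp: Y_def sum_divide_distrib)
  qed
  have Y1W: "Y 1 = (\<lambda>\<omega>. W \<omega> / sqrt K)"
    unfolding Y_def[abs_def] W_def c_def by (simp add: divide_divide_eq_left)
  have Y1m[measurable]: "Y 1 \<in> borel_measurable M" unfolding Y_def using meta meps a1 by auto
  have charY: "char (distr M borel (Y 1)) t = char \<mu> u"
    unfolding char_def \<mu>_def u_def Y1W using Wm by (simp add: integral_distr field_simps)
  have chareq: "char (distr M borel (\<lambda>\<omega>. (\<Sum>a=1..K. eta a 0 \<omega> * eps a 1 \<omega>) / (sqrt K * sqrt v1 * sqrt v2))) t = (char \<mu> u) ^ K"
  proof -
    have "char (distr M borel (\<lambda>\<omega>. \<Sum>a\<in>{1..K}. Y a \<omega>)) t = (\<Prod>a\<in>{1..K}. char (distr M borel (Y a)) t)"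
      by (rule char_distr_sum[OF Yi])
    also have "\<dots> = (\<Prod>a\<in>{1..K}. char \<mu> u)" proof (rule prod.cong[OF refl])
      fix a assume a: "a \<in> {1..K}"
      show "char (distr M borel (Y a)) t = char \<mu> u" by (subst Ylaw[OF a]) (rule charY)
    qed
    finally show ?thesis unfolding sumeq by simp
  qed
  have EW: "integrable M W" "expectation W = 0" "integrable M (\<lambda>\<omega>. (W \<omega>)\<^sup>2)" "expectation (\<lambda>\<omega>. (W \<omega>)\<^sup>2) = 1"
  proof -
    have s: "(sqrt v1 * sqrt v2)\<^sup>2 = v1 * v2" using v1 v2 by (simp add: power_mult_distrib)
    show "integrable M W" "expectation W = 0" using mom_ee[OF a1] unfolding W_def by auto
    show "integrable M (\<lambda>\<omega>. (W \<omega>)\<^sup>2)" "expectation (\<lambda>\<omega>. (W \<omega>)\<^sup>2) = 1"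
      using mom_ee[OF a1] v1 v2 unfolding W_def by (auto simp: power_divide s)
  qed
  have mu1: "integrable \<mu> (\<lambda>x. x)" "\<mu>.expectation (\<lambda>x. x) = 0" "integrable \<mu> (\<lambda>x. x^2)" "\<mu>.variance (\<lambda>x. x) = 1"
    using EW by (simp_all add: \<mu>_def integrable_distr_eq integral_distr)
  have ap: "cmod (char \<mu> u - (1 - u^2 * 1 / 2)) \<le> (u^2 / 6) * \<mu>.expectation (\<lambda>x. min (6 * x^2) (abs u * (abs x)^3))"
    by (rule \<mu>.char_approx3[OF mu1])
  have u2: "u^2 = t^2 / K" using K1 by (simp add: u_def power_divide)
  have ap2: "cmod (char \<mu> u - complex_of_real (1 + (-(t\<^sup>2) / 2) / K)) \<le> (u^2 / 6) * \<mu>.expectation (\<lambda>x. min (6 * x^2) (abs u * (abs x)^3))"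
    using ap by (simp add: u2 diff_divide_distrib mult.commute)
  have "cmod ((char \<mu> u) ^ K - (complex_of_real (1 + (-(t\<^sup>2) / 2) / K)) ^ K) \<le> K * cmod (char \<mu> u - complex_of_real (1 + (-(t\<^sup>2) / 2) / K))"
  proof (rule norm_power_diff)
    show "cmod (char \<mu> u) \<le> 1" by (rule \<mu>.cmod_char_le_1)
    have "t\<^sup>2 / 2 / K \<le> 2" using Kt K1 by (simp add: divide_le_eq)
    moreover have "t\<^sup>2 / 2 / K \<ge> 0" by simp
    ultimately have "\<bar>1 + (-(t\<^sup>2) / 2) / K\<bar> \<le> 1" by (simp add: abs_le_iff)
    then show "cmod (complex_of_real (1 + (-(t\<^sup>2) / 2) / K)) \<le> 1" by (simp only: norm_of_real)
  qed
  also have "\<dots> \<le> K * ((u^2 / 6) * \<mu>.expectation (\<lambda>x. min (6 * x^2) (abs u * (abs x)^3)))"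
    by (rule mult_left_mono[OF ap2]) simp
  also have "\<dots> = t\<^sup>2 / 6 * \<mu>.expectation (\<lambda>x. min (6 * x^2) (abs u * (abs x)^3))"
    using K1 by (simp add: u2)
  also have "\<mu>.expectation (\<lambda>x. min (6 * x^2) (abs u * (abs x)^3)) = expectation (\<lambda>\<omega>. min (6 * (W \<omega>)\<^sup>2) (\<bar>t / sqrt K\<bar> * \<bar>W \<omega>\<bar> ^ 3))"
    unfolding \<mu>_def u_def by (simp add: integral_distr)
  finally show ?thesis unfolding chareq by simp
qed

end

context prob_space
begin

lemma lind_bound:
  fixes W :: "'a \<Rightarrow> real" and Kr e t :: real
  assumes Wm[measurable]: "W \<in> borel_measurable M" and Wi: "integrable M (\<lambda>\<omega>. (W \<omega>)\<^sup>2)"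
    and EW: "expectation (\<lambda>\<omega>. (W \<omega>)\<^sup>2) = 1" and e: "e > 0" and Kr: "Kr \<ge> 1"
  shows "expectation (\<lambda>\<omega>. min (6 * (W \<omega>)\<^sup>2) (\<bar>t / sqrt Kr\<bar> * \<bar>W \<omega>\<bar> ^ 3))
         \<le> 6 * expectation (\<lambda>\<omega>. (W \<omega>)\<^sup>2 * indicator {\<omega>. \<bar>W \<omega>\<bar> \<ge> e * sqrt Kr} \<omega>) + \<bar>t\<bar> * e"
    and "0 \<le> expectation (\<lambda>\<omega>. min (6 * (W \<omega>)\<^sup>2) (\<bar>t / sqrt Kr\<bar> * \<bar>W \<omega>\<bar> ^ 3))"
proof -
  have sK: "sqrt Kr > 0" using Kr by auto
  have ieq: "(\<lambda>\<omega>. (W \<omega>)\<^sup>2 * indicator {\<omega>. \<bar>W \<omega>\<bar> \<ge> e * sqrt Kr} \<omega>) = (\<lambda>\<omega>. if \<bar>W \<omega>\<bar> \<ge> e * sqrt Kr then (W \<omega>)\<^sup>2 else 0)"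
    by (auto simp: indicator_def)
  have i1: "integrable M (\<lambda>\<omega>. min (6 * (W \<omega>)\<^sup>2) (\<bar>t / sqrt Kr\<bar> * \<bar>W \<omega>\<bar> ^ 3))"
    by (rule Bochner_Integration.integrable_bound[of _ "\<lambda>\<omega>. 6 * (W \<omega>)\<^sup>2"]) (use Wi in auto)
  have i2: "integrable M (\<lambda>\<omega>. (W \<omega>)\<^sup>2 * indicator {\<omega>. \<bar>W \<omega>\<bar> \<ge> e * sqrt Kr} \<omega>)"
    unfolding ieq by (rule Bochner_Integration.integrable_bound[of _ "\<lambda>\<omega>. (W \<omega>)\<^sup>2"]) (use Wi in auto)
  have pw: "min (6 * (W \<omega>)\<^sup>2) (\<bar>t / sqrt Kr\<bar> * \<bar>W \<omega>\<bar> ^ 3)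
        \<le> 6 * ((W \<omega>)\<^sup>2 * indicator {\<omega>. \<bar>W \<omega>\<bar> \<ge> e * sqrt Kr} \<omega>) + \<bar>t\<bar> * e * (W \<omega>)\<^sup>2" for \<omega>
  proof (cases "\<bar>W \<omega>\<bar> \<ge> e * sqrt Kr")
    case True
    have "0 \<le> \<bar>t\<bar> * e * (W \<omega>)\<^sup>2" using e by simp
    then show ?thesis using True by (simp add: indicator_def)
  next
    case False
    have "\<bar>t / sqrt Kr\<bar> * \<bar>W \<omega>\<bar> ^ 3 = \<bar>t\<bar> * (W \<omega>)\<^sup>2 * (\<bar>W \<omega>\<bar> / sqrt Kr)"
      using sK by (simp add: abs_divide power2_eq_square power3_eq_cube)
    also have "\<dots> \<le> \<bar>t\<bar> * (W \<omega>)\<^sup>2 * e"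
      using False sK by (intro mult_left_mono) (auto simp: divide_le_eq mult.commute)
    finally have h: "\<bar>t / sqrt Kr\<bar> * \<bar>W \<omega>\<bar> ^ 3 \<le> \<bar>t\<bar> * (W \<omega>)\<^sup>2 * e" .
    have m: "min (6 * (W \<omega>)\<^sup>2) (\<bar>t / sqrt Kr\<bar> * \<bar>W \<omega>\<bar> ^ 3) \<le> \<bar>t / sqrt Kr\<bar> * \<bar>W \<omega>\<bar> ^ 3"
      by (rule min.cobounded2)
    have z: "6 * ((W \<omega>)\<^sup>2 * indicator {\<omega>. \<bar>W \<omega>\<bar> \<ge> e * sqrt Kr} \<omega>) = 0" using False by (simp add: indicator_def)
    have c: "\<bar>t\<bar> * e * (W \<omega>)\<^sup>2 = \<bar>t\<bar> * (W \<omega>)\<^sup>2 * e" by (simp add: mult_ac)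
    show ?thesis using h m z c by linarith
  qed
  have "expectation (\<lambda>\<omega>. min (6 * (W \<omega>)\<^sup>2) (\<bar>t / sqrt Kr\<bar> * \<bar>W \<omega>\<bar> ^ 3))
     \<le> expectation (\<lambda>\<omega>. 6 * ((W \<omega>)\<^sup>2 * indicator {\<omega>. \<bar>W \<omega>\<bar> \<ge> e * sqrt Kr} \<omega>) + \<bar>t\<bar> * e * (W \<omega>)\<^sup>2)"
    by (rule integral_mono[OF i1 _ pw]) (use i2 Wi in auto)
  also have "\<dots> = 6 * expectation (\<lambda>\<omega>. (W \<omega>)\<^sup>2 * indicator {\<omega>. \<bar>W \<omega>\<bar> \<ge> e * sqrt Kr} \<omega>) + \<bar>t\<bar> * e"
    using i2 Wi EW by simp
  finally show "expectation (\<lambda>\<omega>. min (6 * (W \<omega>)\<^sup>2) (\<bar>t / sqrt Kr\<bar> * \<bar>W \<omega>\<bar> ^ 3))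
         \<le> 6 * expectation (\<lambda>\<omega>. (W \<omega>)\<^sup>2 * indicator {\<omega>. \<bar>W \<omega>\<bar> \<ge> e * sqrt Kr} \<omega>) + \<bar>t\<bar> * e" .
  show "0 \<le> expectation (\<lambda>\<omega>. min (6 * (W \<omega>)\<^sup>2) (\<bar>t / sqrt Kr\<bar> * \<bar>W \<omega>\<bar> ^ 3))"
    by (rule integral_nonneg_AE) auto
qed

end

abbreviation "NN \<equiv> std_normal_distribution"

lemma NN_rd: "real_distribution NN" by (rule real_dist_normal_dist)

lemma NN_single: "measure NN {x} = 0"
proof -
  have h: "{x} \<in> null_sets lborel" by (rule finite_imp_null_set_lborel) simp
  have "AE y in lborel. y \<in> {x} \<longrightarrow> ennreal (std_normal_density y) = 0"
    using AE_not_in[OF h] by (rule eventually_mono) auto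
  then have "{x} \<in> null_sets NN"
    by (subst null_sets_density_iff) auto
  from null_setsD1[OF this] show ?thesis by (simp add: measure_def)
qed

lemma NN_sym: "distr NN borel uminus = NN"
proof -
  have "density (distr lborel borel uminus) (\<lambda>x. ennreal (std_normal_density x)) =
        distr (density lborel (\<lambda>x. ennreal (std_normal_density (- x)))) borel uminus"
    by (rule density_distr) auto
  then show ?thesis by (simp add: lborel_distr_uminus std_normal_density_def)
qed

lemma NN_cdf: "std_normal_cdf x = measure NN {..x}"
  by (simp add: std_normal_cdf_def)

lemma NN_neg: "measure NN {..-x} = 1 - measure NN {..x}"
proof -
  interpret N: real_distribution NN by (rule NN_rd)
  have "measure NN {..-x} = measure (distr NN borel uminus) {..-x}" by (simp add: NN_sym)
  also have "\<dots> = measure NN (uminus -` {..-x})" by (subst measure_distr) auto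
  also have "uminus -` {..-x} = {x::real..}" by auto
  also have "measure NN {x..} = measure NN (UNIV - {..<x})" by (rule arg_cong[where f="measure NN"]) auto
  also have "\<dots> = 1 - measure NN {..<x}" using N.prob_compl[of "{..<x}"] by simp
  also have "measure NN {..<x} = measure NN {..x}"
  proof -
    have "measure NN {..x} = measure NN ({..<x} \<union> {x})" by (rule arg_cong[where f="measure NN"]) auto
    also have "\<dots> = measure NN {..<x} + measure NN {x}" by (rule N.finite_measure_Union) auto
    finally show ?thesis using NN_single by simp
  qed
  finally show ?thesis .
qed

definition "GG x = measure NN {-x..x}"

lemma GG_eq: "x \<ge> 0 \<Longrightarrow> GG x = 2 * measure NN {..x} - 1"
proof -
  assume x: "x \<ge> 0"
  interpret N: real_distribution NN by (rule NN_rd)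
  have "measure NN {..x} = measure NN ({..< -x} \<union> {-x..x})" by (rule arg_cong[where f="measure NN"]) (use x in auto)
  also have "\<dots> = measure NN {..< -x} + measure NN {-x..x}" by (rule N.finite_measure_Union) auto
  finally have a: "measure NN {..x} = measure NN {..< -x} + GG x" unfolding GG_def .
  have "measure NN {..-x} = measure NN ({..< -x} \<union> {-x})" by (rule arg_cong[where f="measure NN"]) auto
  also have "\<dots> = measure NN {..< -x} + measure NN {-x}" by (rule N.finite_measure_Union) auto
  finally have b: "measure NN {..-x} = measure NN {..< -x}" using NN_single by simp
  show ?thesis using a b NN_neg[of x] by simp
qed

lemma GG_cont: "x > 0 \<Longrightarrow> isCont GG x"
proof -
  assume x: "x > 0"
  interpret N: real_distribution NN by (rule NN_rd)
  have c: "isCont (cdf NN) y" for y using N.isCont_cdf NN_single by simp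
  have "isCont (\<lambda>y. 2 * cdf NN y - 1) x" using c by (intro continuous_intros) auto
  moreover have "\<forall>\<^sub>F y in nhds x. GG y = 2 * cdf NN y - 1"
    using eventually_nhds_in_open[of "{0<..}" x] x
    by (auto elim!: eventually_mono simp: GG_eq cdf_def2)
  ultimately show ?thesis
    by (metis (mono_tags, lifting) GG_eq cdf_def2 isCont_cong less_eq_real_def x eventually_mono)
qed

lemma q_pos:
  assumes "std_normal_cdf q = 1 - \<alpha> / 2" "0 < \<alpha>" "\<alpha> < 1"
  shows "q > 0"
proof (rule ccontr)
  assume "\<not> q > 0"
  interpret N: real_distribution NN by (rule NN_rd)
  have "measure NN {..0} = 1/2" using NN_neg[of 0] by simp
  moreover have "measure NN {..q} \<le> measure NN {..0}"
    using \<open>\<not> q > 0\<close> by (intro N.finite_measure_mono) auto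
  ultimately show False using assms by (simp add: NN_cdf)
qed

lemma GG_q: "std_normal_cdf q = 1 - \<alpha> / 2 \<Longrightarrow> 0 < \<alpha> \<Longrightarrow> \<alpha> < 1 \<Longrightarrow> GG q = 1 - \<alpha>"
  using q_pos[of q \<alpha>] GG_eq[of q] by (simp add: NN_cdf)

lemma GG_conv:
  assumes rd: "\<And>n. real_distribution (\<mu> n)" and wc: "weak_conv_m \<mu> NN" and x: "x \<ge> 0"
  shows "(\<lambda>n. measure (\<mu> n) {-x..x}) \<longlonglongrightarrow> GG x"
proof -
  have fr: "frontier {-x..x} = {-x, x}"
    using x by (auto simp: frontier_def)
  have "emeasure NN {-x, x} = 0"
  proof -
    have h: "{-x, x} \<in> null_sets lborel" by (rule finite_imp_null_set_lborel) simp
    have "AE y in lborel. y \<in> {-x,x} \<longrightarrow> ennreal (std_normal_density y) = 0"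
      using AE_not_in[OF h] by (rule eventually_mono) auto
    then have "{-x,x} \<in> null_sets NN"
      by (subst null_sets_density_iff) auto
    from null_setsD1[OF this] show ?thesis .
  qed
  then show ?thesis unfolding GG_def
    by (intro weak_conv_imp_continuity_set_conv[OF rd NN_rd wc]) (auto simp: fr)
qed

lemma R_close:
  fixes x1 x2 \<delta> :: real
  assumes "\<bar>x1 - 1\<bar> \<le> \<delta>/3" "\<bar>x2 - 1\<bar> \<le> \<delta>/3" "0 < \<delta>" "\<delta> \<le> 1"
  shows "\<bar>\<bar>x1 * x2\<bar> - 1\<bar> \<le> \<delta>"
proof -
  have "x1 * x2 - 1 = (x1 - 1) * x2 + (x2 - 1)" by (simp add: algebra_simps)
  moreover have "\<bar>x2\<bar> \<le> 4/3" using assms by arith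
  moreover have "\<bar>(x1 - 1) * x2\<bar> \<le> \<delta>/3 * (4/3)"
    unfolding abs_mult using assms calculation(2) by (intro mult_mono) auto
  ultimately have "\<bar>x1 * x2 - 1\<bar> \<le> \<delta>/3 * (4/3) + \<delta>/3"
    using abs_triangle_ineq[of "(x1 - 1) * x2" "x2 - 1"] assms(2) by linarith
  then show ?thesis using assms by linarith
qed

lemma ptw:
  fixes Pi C D A B s1 s2 c h1 h2 \<delta> q \<beta> :: real
  assumes Pi: "Pi > 0" and C: "\<bar>C\<bar> < Pi/4" and D: "\<bar>D\<bar> < Pi/4" and c: "c > 0"
    and s1: "s1 > 0" and s2: "s2 > 0" and \<delta>: "0 < \<delta>" "\<delta> \<le> 1" and q: "q > 0"
    and A: "\<bar>A\<bar> < \<delta> * (c * s1 * s2)" and x1: "\<bar>h1 / s1 - 1\<bar> \<le> \<delta>/3" and x2: "\<bar>h2 / s2 - 1\<bar> \<le> \<delta>/3"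
  shows "\<bar>\<beta> - (\<beta> * (Pi + C + D) + A + B) / (Pi + C + D)\<bar> \<le> \<bar>q * inverse ((Pi + C + D) / c) * h1 * h2\<bar>
           \<Longrightarrow> \<bar>B / (c * s1 * s2)\<bar> \<le> q * (1 + \<delta>) + \<delta>"
    and "\<bar>B / (c * s1 * s2)\<bar> \<le> q * (1 - \<delta>) - \<delta> \<Longrightarrow>
           \<bar>\<beta> - (\<beta> * (Pi + C + D) + A + B) / (Pi + C + D)\<bar> \<le> \<bar>q * inverse ((Pi + C + D) / c) * h1 * h2\<bar>"
proof -
  define den where "den = Pi + C + D"
  define s where "s = c * s1 * s2"
  define R where "R = \<bar>h1 / s1 * (h2 / s2)\<bar>"
  have s: "s > 0" using c s1 s2 by (simp add: s_def)
  have dpos: "\<bar>den\<bar> > 0" using Pi C D unfolding den_def by linarith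
  have L: "\<bar>\<beta> - (\<beta> * den + A + B) / den\<bar> = \<bar>A + B\<bar> / \<bar>den\<bar>"
  proof -
    have "\<beta> - (\<beta> * den + A + B) / den = - ((A + B) / den)" using dpos by (auto simp: field_simps)
    then show ?thesis by (simp add: abs_divide)
  qed
  have Rr: "\<bar>q * inverse (den / c) * h1 * h2\<bar> = q * s * R / \<bar>den\<bar>"
    using q c s1 s2 by (simp add: R_def s_def abs_mult abs_divide field_simps)
  have iff: "(\<bar>\<beta> - (\<beta> * den + A + B) / den\<bar> \<le> \<bar>q * inverse (den / c) * h1 * h2\<bar>) \<longleftrightarrow> \<bar>A / s + B / s\<bar> \<le> q * R"
  proof -
    have "(\<bar>A + B\<bar> / \<bar>den\<bar> \<le> q * s * R / \<bar>den\<bar>) \<longleftrightarrow> \<bar>A + B\<bar> \<le> q * s * R"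
      using dpos by (simp add: divide_le_cancel)
    also have "\<dots> \<longleftrightarrow> \<bar>A + B\<bar> / s \<le> q * R"
      using s by (simp add: pos_divide_le_eq mult_ac)
    also have "\<bar>A + B\<bar> / s = \<bar>A / s + B / s\<bar>" using s by (simp add: add_divide_distrib[symmetric] abs_divide)
    finally show ?thesis unfolding L Rr .
  qed
  have Rc: "\<bar>R - 1\<bar> \<le> \<delta>" unfolding R_def by (rule R_close[OF x1 x2 \<delta>])
  have As: "\<bar>A / s\<bar> < \<delta>" using A s by (simp add: abs_divide divide_less_eq s_def)
  have qR1: "q * R \<le> q * (1 + \<delta>)" using Rc q by (intro mult_left_mono) auto
  have qR2: "q * (1 - \<delta>) \<le> q * R" using Rc q by (intro mult_left_mono) auto
  show "\<bar>\<beta> - (\<beta> * (Pi + C + D) + A + B) / (Pi + C + D)\<bar> \<le> \<bar>q * inverse ((Pi + C + D) / c) * h1 * h2\<bar>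
           \<Longrightarrow> \<bar>B / (c * s1 * s2)\<bar> \<le> q * (1 + \<delta>) + \<delta>"
  proof -
    assume "\<bar>\<beta> - (\<beta> * (Pi + C + D) + A + B) / (Pi + C + D)\<bar> \<le> \<bar>q * inverse ((Pi + C + D) / c) * h1 * h2\<bar>"
    then have "\<bar>A / s + B / s\<bar> \<le> q * R" using iff unfolding den_def by simp
    then show ?thesis using As qR1 unfolding s_def by linarith
  qed
  show "\<bar>B / (c * s1 * s2)\<bar> \<le> q * (1 - \<delta>) - \<delta> \<Longrightarrow>
           \<bar>\<beta> - (\<beta> * (Pi + C + D) + A + B) / (Pi + C + D)\<bar> \<le> \<bar>q * inverse ((Pi + C + D) / c) * h1 * h2\<bar>"
  proof -
    assume "\<bar>B / (c * s1 * s2)\<bar> \<le> q * (1 - \<delta>) - \<delta>"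
    then have "\<bar>A / s + B / s\<bar> \<le> q * R" using As qR2 unfolding s_def by linarith
    then show ?thesis using iff unfolding den_def by simp
  qed
qed

lemma ptw_cons:
  fixes Pi C D A B \<beta> e :: real
  assumes Pi: "Pi > 0" and C: "\<bar>C\<bar> < Pi/4" and D: "\<bar>D\<bar> < Pi/4" and e: "e > 0"
    and A: "\<bar>A\<bar> < e * Pi / 4" and B: "\<bar>B\<bar> < e * Pi / 4"
  shows "\<bar>(\<beta> * (Pi + C + D) + A + B) / (Pi + C + D) - \<beta>\<bar> \<le> e"
proof -
  define den where "den = Pi + C + D"
  have dpos: "\<bar>den\<bar> > Pi / 2" using Pi C D unfolding den_def by linarith
  have dn: "den \<noteq> 0" using dpos Pi by auto
  have "(\<beta> * den + A + B) / den - \<beta> = (A + B) / den" using dn by (simp add: field_simps)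
  then have "\<bar>(\<beta> * den + A + B) / den - \<beta>\<bar> = \<bar>A + B\<bar> / \<bar>den\<bar>" by (simp add: abs_divide)
  also have "\<dots> \<le> (e * Pi / 2) / (Pi / 2)"
    using A B dpos Pi abs_triangle_ineq[of A B] by (intro frac_le) auto
  also have "\<dots> = e" using Pi by simp
  finally show ?thesis unfolding den_def .
qed

context jrow
begin

lemma W_facts:
  defines "W \<equiv> \<lambda>\<omega>. (eta 1 0 \<omega> * eps 1 1 \<omega>) / (sqrt v1 * sqrt v2)"
  shows "W \<in> borel_measurable M" "integrable M (\<lambda>\<omega>. (W \<omega>)\<^sup>2)" "expectation (\<lambda>\<omega>. (W \<omega>)\<^sup>2) = 1"
proof -
  have a1: "1 \<in> {1..K}" using K1 by auto
  have v1: "v1 > 0" and v2: "v2 > 0" using v1pos v2pos unfolding v1_def v2_def by auto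
  have s: "(sqrt v1 * sqrt v2)\<^sup>2 = v1 * v2" using v1 v2 by (simp add: power_mult_distrib)
  show "W \<in> borel_measurable M" using meta meps a1 unfolding W_def by auto
  show "integrable M (\<lambda>\<omega>. (W \<omega>)\<^sup>2)" "expectation (\<lambda>\<omega>. (W \<omega>)\<^sup>2) = 1"
    using mom_ee[OF a1] v1 v2 unfolding W_def by (auto simp: power_divide s)
qed

lemma meas_sums:
  fixes fs :: "nat \<Rightarrow> real"
  shows "(\<lambda>\<omega>. \<Sum>a=1..K. fs a * eps a 1 \<omega>) \<in> borel_measurable M"
    "(\<lambda>\<omega>. \<Sum>a=1..K. eta a 0 \<omega> * eps a 1 \<omega>) \<in> borel_measurable M"
    "(\<lambda>\<omega>. \<Sum>a=1..K. fs a * (eta a 0 \<omega> + eta a 1 \<omega>)) \<in> borel_measurable M"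
    "(\<lambda>\<omega>. \<Sum>a=1..K. eta a 0 \<omega> * eta a 1 \<omega>) \<in> borel_measurable M"
  using meta meps by (auto intro!: borel_measurable_sum)

lemma chebs:
  fixes fs :: "nat \<Rightarrow> real" and t :: real
  assumes t: "t > 0"
  shows "prob {\<omega> \<in> space M. \<bar>\<Sum>a=1..K. fs a * eps a 1 \<omega>\<bar> \<ge> t} \<le> (\<Sum>a=1..K. (fs a)\<^sup>2) * v2 / t\<^sup>2"
    "prob {\<omega> \<in> space M. \<bar>\<Sum>a=1..K. eta a 0 \<omega> * eps a 1 \<omega>\<bar> \<ge> t} \<le> K * (v1 * v2) / t\<^sup>2"
    "prob {\<omega> \<in> space M. \<bar>\<Sum>a=1..K. fs a * (eta a 0 \<omega> + eta a 1 \<omega>)\<bar> \<ge> t} \<le> (\<Sum>a=1..K. (fs a)\<^sup>2) * (2 * v1) / t\<^sup>2"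
    "prob {\<omega> \<in> space M. \<bar>\<Sum>a=1..K. eta a 0 \<omega> * eta a 1 \<omega>\<bar> \<ge> t} \<le> K * (v1 * v1) / t\<^sup>2"
  using cheb0[OF meas_sums(1) sumA(1) t, of fs] sumA(2)[of fs]
    cheb0[OF meas_sums(2) sumB(1) t] sumB(2)
    cheb0[OF meas_sums(3) sumC(1) t, of fs] sumC(2)[of fs]
    cheb0[OF meas_sums(4) sumD(1) t] sumD(2)
  by auto

end

lemma measure_Un4:
  assumes "A \<in> sets M" "B \<in> sets M" "C \<in> sets M" "D \<in> sets M"
  shows "measure M (A \<union> B \<union> C \<union> D) \<le> measure M A + measure M B + measure M C + measure M D"
  using measure_Un_le[of A M B] measure_Un_le[of "A \<union> B" M C] measure_Un_le[of "A \<union> B \<union> C" M D] assms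
  by auto

lemma measure_Un5:
  assumes "A \<in> sets M" "B \<in> sets M" "C \<in> sets M" "D \<in> sets M" "E \<in> sets M"
  shows "measure M (A \<union> B \<union> C \<union> D \<union> E) \<le> measure M A + measure M B + measure M C + measure M D + measure M E"
  using measure_Un4[OF assms(1-4)] measure_Un_le[of "A \<union> B \<union> C \<union> D" M E] assms
  by auto

lemma to0:
  fixes p b :: "nat \<Rightarrow> real"
  assumes "\<And>m. 0 \<le> p m" "eventually (\<lambda>m. p m \<le> b m) sequentially" "b \<longlonglongrightarrow> 0"
  shows "p \<longlonglongrightarrow> 0"
  using assms by (intro tendsto_sandwich[of "\<lambda>_. 0" p sequentially b 0]) auto

theorem theorem3:
  fixes M :: "nat \<Rightarrow> 'w measure"
    and K :: "nat \<Rightarrow> nat"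
    and \<beta> :: real
    and fs :: "nat \<Rightarrow> nat \<Rightarrow> real"
    and eta eps :: "nat \<Rightarrow> nat \<Rightarrow> nat \<Rightarrow> 'w \<Rightarrow> real"
    and sh_eta sh_eps :: "nat \<Rightarrow> 'w \<Rightarrow> real"
    and \<alpha> q c :: real
  assumes prob: "\<And>m. prob_space (M m)"
    and K_pos: "\<And>m. K m \<ge> 1"
    and K_inf: "filterlim K at_top sequentially"
    and meas_eta: "\<And>m a v. a \<in> {1..K m} \<Longrightarrow> v \<in> {0,1} \<Longrightarrow> eta m a v \<in> borel_measurable (M m)"
    and meas_eps: "\<And>m a v. a \<in> {1..K m} \<Longrightarrow> v \<in> {0,1} \<Longrightarrow> eps m a v \<in> borel_measurable (M m)"
    and indep: "\<And>m. prob_space.indep_vars (M m) (\<lambda>_. borel)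
                   (\<lambda>(a,v) \<omega>. (eta m a v \<omega>, eps m a v \<omega>)) ({1..K m} \<times> {0,1})"
    and ident: "\<And>m a v. a \<in> {1..K m} \<Longrightarrow> v \<in> {0,1} \<Longrightarrow>
                   distr (M m) borel (\<lambda>\<omega>. (eta m a v \<omega>, eps m a v \<omega>))
                 = distr (M m) borel (\<lambda>\<omega>. (eta m 1 0 \<omega>, eps m 1 0 \<omega>))"
    and int_eta: "\<And>m a v. a \<in> {1..K m} \<Longrightarrow> v \<in> {0,1} \<Longrightarrow> integrable (M m) (eta m a v)"
    and int_eps: "\<And>m a v. a \<in> {1..K m} \<Longrightarrow> v \<in> {0,1} \<Longrightarrow> integrable (M m) (eps m a v)"
    and mean_eta: "\<And>m a v. a \<in> {1..K m} \<Longrightarrow> v \<in> {0,1} \<Longrightarrow> (LINT \<omega>|M m. eta m a v \<omega>) = 0"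
    and mean_eps: "\<And>m a v. a \<in> {1..K m} \<Longrightarrow> v \<in> {0,1} \<Longrightarrow> (LINT \<omega>|M m. eps m a v \<omega>) = 0"
    and sq_eta: "\<And>m a v. a \<in> {1..K m} \<Longrightarrow> v \<in> {0,1} \<Longrightarrow> integrable (M m) (\<lambda>\<omega>. (eta m a v \<omega>)\<^sup>2)"
    and sq_eps: "\<And>m a v. a \<in> {1..K m} \<Longrightarrow> v \<in> {0,1} \<Longrightarrow> integrable (M m) (\<lambda>\<omega>. (eps m a v \<omega>)\<^sup>2)"
    and var_eta_pos: "\<And>m. (LINT \<omega>|M m. (eta m 1 0 \<omega>)\<^sup>2) > 0"
    and var_eps_pos: "\<And>m. (LINT \<omega>|M m. (eps m 1 0 \<omega>)\<^sup>2) > 0"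
    and a1: "(\<lambda>m. (\<Sum>a = 1..K m. (fs m a)\<^sup>2) / (real (K m) * (sig_eta M eta m)\<^sup>2)) \<longlonglongrightarrow> 0"
    and c_nonneg: "c \<ge> 0"
    and a2: "(\<lambda>m. sig_eps M eps m / sig_eta M eta m) \<longlonglongrightarrow> c"
    and a3: "filterlim (\<lambda>m. (\<Sum>a = 1..K m. (fs m a)\<^sup>2) / (sqrt (real (K m)) * (sig_eta M eta m)\<^sup>2))
               at_top sequentially"
    and lindeberg: "\<And>e. e > 0 \<Longrightarrow>
        (\<lambda>m. LINT \<omega>|M m.
            ((eta m 1 0 \<omega> * eps m 1 1 \<omega>) / (sig_eta M eta m * sig_eps M eps m))\<^sup>2 *
            indicator {\<omega>. \<bar>(eta m 1 0 \<omega> * eps m 1 1 \<omega>) / (sig_eta M eta m * sig_eps M eps m)\<bar>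
                          \<ge> e * sqrt (real (K m))} \<omega>) \<longlonglongrightarrow> 0"
    and meas_sh_eta: "\<And>m. sh_eta m \<in> borel_measurable (M m)"
    and meas_sh_eps: "\<And>m. sh_eps m \<in> borel_measurable (M m)"
    and cons_eta: "conv_in_prob M (\<lambda>m \<omega>. sh_eta m \<omega> / sig_eta M eta m) 1"
    and cons_eps: "conv_in_prob M (\<lambda>m \<omega>. sh_eps m \<omega> / sig_eps M eps m) 1"
    and alpha: "0 < \<alpha>" "\<alpha> < 1"
    and quantile: "std_normal_cdf q = 1 - \<alpha> / 2"
  shows "((\<lambda>m. measure (M m) {\<omega> \<in> space (M m). in_CI K \<beta> fs eta eps sh_eta sh_eps q m \<omega>})
           \<longlonglongrightarrow> 1 - \<alpha>) \<and>
         conv_in_prob M (beta_hat K \<beta> fs eta eps) \<beta>"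
proof -
  have row: "jrow (M m) (K m) (eta m) (eps m)" for m
    by (rule jrow.intro[OF prob jrow_axioms.intro[OF K_pos meas_eta meas_eps indep ident int_eta int_eps mean_eta mean_eps sq_eta sq_eps var_eta_pos var_eps_pos]])
  have q: "q > 0" using q_pos[OF quantile alpha] .
  define s1 where "s1 m = sig_eta M eta m" for m
  define s2 where "s2 m = sig_eps M eps m" for m
  define Pi where "Pi m = (\<Sum>a = 1..K m. (fs m a)\<^sup>2)" for m
  define A where "A m \<omega> = (\<Sum>a=1..K m. fs m a * eps m a 1 \<omega>)" for m \<omega>
  define B where "B m \<omega> = (\<Sum>a=1..K m. eta m a 0 \<omega> * eps m a 1 \<omega>)" for m \<omega>
  define C where "C m \<omega> = (\<Sum>a=1..K m. fs m a * (eta m a 0 \<omega> + eta m a 1 \<omega>))" for m \<omega>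
  define D where "D m \<omega> = (\<Sum>a=1..K m. eta m a 0 \<omega> * eta m a 1 \<omega>)" for m \<omega>
  define Z where "Z m \<omega> = B m \<omega> / (sqrt (K m) * s1 m * s2 m)" for m \<omega>
  have s1pos: "s1 m > 0" for m using var_eta_pos[of m] by (simp add: s1_def sig_eta_def)
  have s2pos: "s2 m > 0" for m using var_eps_pos[of m] by (simp add: s2_def sig_eps_def)
  have v1eq: "jrow.v1 (M m) (eta m) = (s1 m)\<^sup>2" for m
    using var_eta_pos[of m] by (simp add: jrow.v1_def[OF row] s1_def sig_eta_def)
  have v2eq: "jrow.v2 (M m) (eps m) = (s2 m)\<^sup>2" for m
    using var_eps_pos[of m] by (simp add: jrow.v2_def[OF row] s2_def sig_eps_def)
  have Kpos: "real (K m) \<ge> 1" for m using K_pos[of m] by simp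
  have measA: "A m \<in> borel_measurable (M m)" "B m \<in> borel_measurable (M m)"
    "C m \<in> borel_measurable (M m)" "D m \<in> borel_measurable (M m)" for m
    using jrow.meas_sums(1)[OF row[of m], of "fs m"] jrow.meas_sums(2)[OF row[of m]]
      jrow.meas_sums(3)[OF row[of m], of "fs m"] jrow.meas_sums(4)[OF row[of m]] by (simp_all add: A_def[abs_def] B_def[abs_def] C_def[abs_def] D_def[abs_def])
  have den_eq: "jive_den K fs eta m \<omega> = Pi m + C m \<omega> + D m \<omega>" for m \<omega>
  proof -
    have "jive_den K fs eta m \<omega> = (\<Sum>a=1..K m. (fs m a)\<^sup>2 + fs m a * (eta m a 0 \<omega> + eta m a 1 \<omega>) + eta m a 0 \<omega> * eta m a 1 \<omega>)"
      unfolding jive_den_def Sbar_def by (intro sum.cong) (simp_all add: algebra_simps power2_eq_square)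
    then show ?thesis by (simp add: sum.distrib Pi_def C_def D_def)
  qed
  have bh_eq: "beta_hat K \<beta> fs eta eps m \<omega> = (\<beta> * (Pi m + C m \<omega> + D m \<omega>) + A m \<omega> + B m \<omega>) / (Pi m + C m \<omega> + D m \<omega>)" for m \<omega>
  proof -
    have "(\<Sum>a = 1..K m. Sbar fs eta m a 0 \<omega> * Ybar \<beta> fs eta eps m a 1 \<omega>)
        = (\<Sum>a = 1..K m. \<beta> * (Sbar fs eta m a 0 \<omega> * Sbar fs eta m a 1 \<omega>) + fs m a * eps m a 1 \<omega> + eta m a 0 \<omega> * eps m a 1 \<omega>)"
      unfolding Ybar_def by (intro sum.cong) (simp_all add: Sbar_def algebra_simps)
    also have "\<dots> = \<beta> * jive_den K fs eta m \<omega> + A m \<omega> + B m \<omega>"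
      by (simp add: sum.distrib sum_distrib_left jive_den_def A_def B_def)
    finally show ?thesis unfolding beta_hat_def den_eq by simp
  qed
  have cheb: "measure (M m) {\<omega> \<in> space (M m). \<bar>A m \<omega>\<bar> \<ge> t} \<le> Pi m * (s2 m)\<^sup>2 / t\<^sup>2"
    "measure (M m) {\<omega> \<in> space (M m). \<bar>B m \<omega>\<bar> \<ge> t} \<le> K m * ((s1 m)\<^sup>2 * (s2 m)\<^sup>2) / t\<^sup>2"
    "measure (M m) {\<omega> \<in> space (M m). \<bar>C m \<omega>\<bar> \<ge> t} \<le> Pi m * (2 * (s1 m)\<^sup>2) / t\<^sup>2"
    "measure (M m) {\<omega> \<in> space (M m). \<bar>D m \<omega>\<bar> \<ge> t} \<le> K m * ((s1 m)\<^sup>2 * (s1 m)\<^sup>2) / t\<^sup>2"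
    if t: "t > 0" for m t
    using jrow.chebs(1)[OF row[of m] t, of "fs m"] jrow.chebs(2)[OF row[of m] t]
      jrow.chebs(3)[OF row[of m] t, of "fs m"] jrow.chebs(4)[OF row[of m] t] v1eq[of m] v2eq[of m]
    by (simp_all add: A_def B_def C_def D_def Pi_def)
  define g where "g m = Pi m / (sqrt (K m) * (s1 m)\<^sup>2)" for m
  have g_top: "filterlim g at_top sequentially" using a3 by (simp add: g_def[abs_def] Pi_def s1_def)
  have ev_Pi: "eventually (\<lambda>m. Pi m > 0) sequentially"
  proof -
    have "eventually (\<lambda>m. 1 \<le> g m) sequentially" using g_top by (simp add: filterlim_at_top)
    then show ?thesis
    proof (rule eventually_mono)
      fix m assume g1: "1 \<le> g m"
      have d: "0 < sqrt (K m) * (s1 m)\<^sup>2" using s1pos[of m] Kpos[of m] by simp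
      then have "sqrt (K m) * (s1 m)\<^sup>2 \<le> Pi m" using g1 by (simp add: g_def le_divide_eq)
      then show "Pi m > 0" using d by linarith
    qed
  qed
  have Kr_top: "filterlim (\<lambda>m. real (K m)) at_top sequentially"
    by (rule filterlim_compose[OF filterlim_real_sequentially K_inf])
  have isK: "(\<lambda>m. inverse (sqrt (real (K m)))) \<longlonglongrightarrow> 0"
    by (rule tendsto_inverse_0_at_top[OF filterlim_compose[OF sqrt_at_top Kr_top]])
  have ig: "(\<lambda>m. inverse (g m)) \<longlonglongrightarrow> 0" by (rule tendsto_inverse_0_at_top[OF g_top])
  define l1 where "l1 m = (s1 m)\<^sup>2 / Pi m" for m
  define l2 where "l2 m = real (K m) * ((s1 m)\<^sup>2 * (s1 m)\<^sup>2) / (Pi m)\<^sup>2" for m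
  define l3 where "l3 m = (s2 m)\<^sup>2 / Pi m" for m
  define l4 where "l4 m = real (K m) * ((s1 m)\<^sup>2 * (s2 m)\<^sup>2) / (Pi m)\<^sup>2" for m
  define l5 where "l5 m = Pi m / (real (K m) * (s1 m)\<^sup>2)" for m
  define rt where "rt m = s2 m / s1 m" for m
  have l1eq: "l1 m = inverse (g m) * inverse (sqrt (real (K m)))" for m
    using s1pos[of m] Kpos[of m] by (cases "Pi m = 0") (simp_all add: l1_def g_def field_simps)
  have l2eq: "l2 m = (inverse (g m))\<^sup>2" for m
    using s1pos[of m] Kpos[of m] by (cases "Pi m = 0") (simp_all add: l2_def g_def field_simps power2_eq_square)
  have l3eq: "l3 m = (rt m)\<^sup>2 * l1 m" for m
    using s1pos[of m] by (simp add: l3_def l1_def rt_def power_divide)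
  have l4eq: "l4 m = (rt m)\<^sup>2 * l2 m" for m
    using s1pos[of m] by (cases "Pi m = 0") (simp_all add: l4_def l2_def rt_def field_simps power2_eq_square)
  have rt: "rt \<longlonglongrightarrow> c" using a2 by (simp add: rt_def[abs_def] s1_def s2_def)
  have l1: "l1 \<longlonglongrightarrow> 0" unfolding l1eq[abs_def] using tendsto_mult[OF ig isK] by simp
  have l2: "l2 \<longlonglongrightarrow> 0" unfolding l2eq[abs_def] using tendsto_power[OF ig, of 2] by simp
  have l3: "l3 \<longlonglongrightarrow> 0" unfolding l3eq[abs_def] using tendsto_mult[OF tendsto_power[OF rt, of 2] l1] by simp
  have l4: "l4 \<longlonglongrightarrow> 0" unfolding l4eq[abs_def] using tendsto_mult[OF tendsto_power[OF rt, of 2] l2] by simp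
  have l5: "l5 \<longlonglongrightarrow> 0" using a1 by (simp add: l5_def[abs_def] Pi_def s1_def)
  define pC where "pC m = measure (M m) {\<omega> \<in> space (M m). Pi m / 4 \<le> \<bar>C m \<omega>\<bar>}" for m
  define pD where "pD m = measure (M m) {\<omega> \<in> space (M m). Pi m / 4 \<le> \<bar>D m \<omega>\<bar>}" for m
  have pC: "pC \<longlonglongrightarrow> 0"
  proof (rule to0)
    show "0 \<le> pC m" for m by (simp add: pC_def)
    show "eventually (\<lambda>m. pC m \<le> 32 * l1 m) sequentially"
      using ev_Pi
    proof (rule eventually_mono)
      fix m assume P: "Pi m > 0"
      have "pC m \<le> Pi m * (2 * (s1 m)\<^sup>2) / (Pi m / 4)\<^sup>2" unfolding pC_def using cheb(3)[of "Pi m / 4" m] P by simp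
      also have "\<dots> = 32 * l1 m" using P by (simp add: l1_def field_simps power2_eq_square)
      finally show "pC m \<le> 32 * l1 m" .
    qed
    show "(\<lambda>m. 32 * l1 m) \<longlonglongrightarrow> 0" using tendsto_mult_right_zero[OF l1, of 32] by simp
  qed
  have pD: "pD \<longlonglongrightarrow> 0"
  proof (rule to0)
    show "0 \<le> pD m" for m by (simp add: pD_def)
    show "eventually (\<lambda>m. pD m \<le> 16 * l2 m) sequentially"
      using ev_Pi
    proof (rule eventually_mono)
      fix m assume P: "Pi m > 0"
      have "pD m \<le> K m * ((s1 m)\<^sup>2 * (s1 m)\<^sup>2) / (Pi m / 4)\<^sup>2" unfolding pD_def using cheb(4)[of "Pi m / 4" m] P by simp
      also have "\<dots> = 16 * l2 m" using P by (simp add: l2_def field_simps power2_eq_square)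
      finally show "pD m \<le> 16 * l2 m" .
    qed
    show "(\<lambda>m. 16 * l2 m) \<longlonglongrightarrow> 0" using tendsto_mult_right_zero[OF l2, of 16] by simp
  qed
  have cons: "conv_in_prob M (beta_hat K \<beta> fs eta eps) \<beta>"
    unfolding conv_in_prob_def
  proof (intro allI impI)
    fix e :: real assume e: "e > 0"
    define pA where "pA m = measure (M m) {\<omega> \<in> space (M m). e * Pi m / 4 \<le> \<bar>A m \<omega>\<bar>}" for m
    define pB where "pB m = measure (M m) {\<omega> \<in> space (M m). e * Pi m / 4 \<le> \<bar>B m \<omega>\<bar>}" for m
    have pA: "pA \<longlonglongrightarrow> 0"
    proof (rule to0)
      show "0 \<le> pA m" for m by (simp add: pA_def)
      show "eventually (\<lambda>m. pA m \<le> 16 / e\<^sup>2 * l3 m) sequentially"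
        using ev_Pi
      proof (rule eventually_mono)
        fix m assume P: "Pi m > 0"
        have "pA m \<le> Pi m * (s2 m)\<^sup>2 / (e * Pi m / 4)\<^sup>2" unfolding pA_def using cheb(1)[of "e * Pi m / 4" m] P e by simp
        also have "\<dots> = 16 / e\<^sup>2 * l3 m" using P e by (simp add: l3_def field_simps power2_eq_square)
        finally show "pA m \<le> 16 / e\<^sup>2 * l3 m" .
      qed
      show "(\<lambda>m. 16 / e\<^sup>2 * l3 m) \<longlonglongrightarrow> 0" using tendsto_mult_right_zero[OF l3, of "16 / e\<^sup>2"] by simp
    qed
    have pB: "pB \<longlonglongrightarrow> 0"
    proof (rule to0)
      show "0 \<le> pB m" for m by (simp add: pB_def)
      show "eventually (\<lambda>m. pB m \<le> 16 / e\<^sup>2 * l4 m) sequentially"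
        using ev_Pi
      proof (rule eventually_mono)
        fix m assume P: "Pi m > 0"
        have "pB m \<le> K m * ((s1 m)\<^sup>2 * (s2 m)\<^sup>2) / (e * Pi m / 4)\<^sup>2" unfolding pB_def using cheb(2)[of "e * Pi m / 4" m] P e by simp
        also have "\<dots> = 16 / e\<^sup>2 * l4 m" using P e by (simp add: l4_def field_simps power2_eq_square)
        finally show "pB m \<le> 16 / e\<^sup>2 * l4 m" .
      qed
      show "(\<lambda>m. 16 / e\<^sup>2 * l4 m) \<longlonglongrightarrow> 0" using tendsto_mult_right_zero[OF l4, of "16 / e\<^sup>2"] by simp
    qed
    show "(\<lambda>m. measure (M m) {\<omega> \<in> space (M m). e < \<bar>beta_hat K \<beta> fs eta eps m \<omega> - \<beta>\<bar>}) \<longlonglongrightarrow> 0"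
    proof (rule to0)
      show "0 \<le> measure (M m) {\<omega> \<in> space (M m). e < \<bar>beta_hat K \<beta> fs eta eps m \<omega> - \<beta>\<bar>}" for m by simp
      show "eventually (\<lambda>m. measure (M m) {\<omega> \<in> space (M m). e < \<bar>beta_hat K \<beta> fs eta eps m \<omega> - \<beta>\<bar>}
              \<le> pC m + pD m + pA m + pB m) sequentially"
        using ev_Pi
      proof (rule eventually_mono)
        fix m assume P: "Pi m > 0"
        interpret r: prob_space "M m" by (rule prob)
        note [measurable] = measA[of m]
        let ?U = "{\<omega> \<in> space (M m). Pi m / 4 \<le> \<bar>C m \<omega>\<bar>} \<union> {\<omega> \<in> space (M m). Pi m / 4 \<le> \<bar>D m \<omega>\<bar>}
           \<union> {\<omega> \<in> space (M m). e * Pi m / 4 \<le> \<bar>A m \<omega>\<bar>} \<union> {\<omega> \<in> space (M m). e * Pi m / 4 \<le> \<bar>B m \<omega>\<bar>}"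
        have "{\<omega> \<in> space (M m). e < \<bar>beta_hat K \<beta> fs eta eps m \<omega> - \<beta>\<bar>} \<subseteq> ?U"
        proof
          fix \<omega> assume "\<omega> \<in> {\<omega> \<in> space (M m). e < \<bar>beta_hat K \<beta> fs eta eps m \<omega> - \<beta>\<bar>}"
          then have w: "\<omega> \<in> space (M m)" and gt: "e < \<bar>beta_hat K \<beta> fs eta eps m \<omega> - \<beta>\<bar>" by auto
          show "\<omega> \<in> ?U"
          proof (rule ccontr)
            assume "\<omega> \<notin> ?U"
            with w have h: "\<bar>C m \<omega>\<bar> < Pi m / 4" "\<bar>D m \<omega>\<bar> < Pi m / 4" "\<bar>A m \<omega>\<bar> < e * Pi m / 4" "\<bar>B m \<omega>\<bar> < e * Pi m / 4"
              by auto
            from ptw_cons[OF P h(1,2) e h(3,4), of \<beta>] gt show False by (simp add: bh_eq)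
          qed
        qed
        then have "measure (M m) {\<omega> \<in> space (M m). e < \<bar>beta_hat K \<beta> fs eta eps m \<omega> - \<beta>\<bar>} \<le> measure (M m) ?U"
          by (intro r.finite_measure_mono) measurable
        also have "\<dots> \<le> pC m + pD m + pA m + pB m"
          unfolding pC_def pD_def pA_def pB_def by (rule measure_Un4) measurable
        finally show "measure (M m) {\<omega> \<in> space (M m). e < \<bar>beta_hat K \<beta> fs eta eps m \<omega> - \<beta>\<bar>} \<le> pC m + pD m + pA m + pB m" .
      qed
      show "(\<lambda>m. pC m + pD m + pA m + pB m) \<longlonglongrightarrow> 0"
        using tendsto_add[OF tendsto_add[OF tendsto_add[OF pC pD] pA] pB] by simp
    qed
  qed
  have Zm: "Z m \<in> borel_measurable (M m)" for m using measA(2)[of m] by (simp add: Z_def[abs_def])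
  have sv1: "sqrt (jrow.v1 (M m) (eta m)) = sig_eta M eta m" for m by (simp add: jrow.v1_def[OF row] sig_eta_def)
  have sv2: "sqrt (jrow.v2 (M m) (eps m)) = sig_eps M eps m" for m by (simp add: jrow.v2_def[OF row] sig_eps_def)
  have wc: "weak_conv_m (\<lambda>m. distr (M m) borel (Z m)) NN"
  proof (rule levy_continuity)
    show "real_distribution (distr (M m) borel (Z m))" for m
      using prob_space.real_distribution_distr[OF prob Zm] .
    show "real_distribution NN" by (rule NN_rd)
    fix t :: real
    define W where "W m \<omega> = (eta m 1 0 \<omega> * eps m 1 1 \<omega>) / (sig_eta M eta m * sig_eps M eps m)" for m \<omega>
    define Em where "Em m = (LINT \<omega>|M m. min (6 * (W m \<omega>)\<^sup>2) (\<bar>t / sqrt (real (K m))\<bar> * \<bar>W m \<omega>\<bar> ^ 3))" for m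
    have Wf: "W m \<in> borel_measurable (M m)" "integrable (M m) (\<lambda>\<omega>. (W m \<omega>)\<^sup>2)" "(LINT \<omega>|M m. (W m \<omega>)\<^sup>2) = 1" for m
      using jrow.W_facts[OF row[of m]] by (simp_all add: sv1 sv2 W_def[abs_def])
    have Em0: "0 \<le> Em m" for m
      unfolding Em_def by (rule prob_space.lind_bound(2)[OF prob Wf(1) Wf(2) Wf(3) zero_less_one Kpos])
    have Em: "Em \<longlonglongrightarrow> 0"
    proof (rule order_tendstoI)
      fix a :: real assume "a < 0"
      then show "eventually (\<lambda>m. a < Em m) sequentially" using Em0 by (intro always_eventually) (auto intro: less_le_trans)
    next
      fix r :: real assume r: "0 < r"
      define e where "e = r / (2 * (\<bar>t\<bar> + 1))"
      have e: "e > 0" using r by (simp add: e_def)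
      have te: "\<bar>t\<bar> * e < r / 2"
      proof -
        have "\<bar>t\<bar> * e = r / 2 * (\<bar>t\<bar> / (\<bar>t\<bar> + 1))" by (simp add: e_def field_simps)
        also have "\<dots> < r / 2 * 1" using r by (intro mult_strict_left_mono) auto
        finally show ?thesis by simp
      qed
      have L: "(\<lambda>m. LINT \<omega>|M m. (W m \<omega>)\<^sup>2 * indicator {\<omega>. \<bar>W m \<omega>\<bar> \<ge> e * sqrt (real (K m))} \<omega>) \<longlonglongrightarrow> 0"
        using lindeberg[OF e] by (simp add: W_def)
      have "eventually (\<lambda>m. (LINT \<omega>|M m. (W m \<omega>)\<^sup>2 * indicator {\<omega>. \<bar>W m \<omega>\<bar> \<ge> e * sqrt (real (K m))} \<omega>) < r / 12) sequentially"
        by (rule order_tendstoD(2)[OF L]) (use r in simp)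
      then show "eventually (\<lambda>m. Em m < r) sequentially"
      proof (rule eventually_mono)
        fix m assume h: "(LINT \<omega>|M m. (W m \<omega>)\<^sup>2 * indicator {\<omega>. \<bar>W m \<omega>\<bar> \<ge> e * sqrt (real (K m))} \<omega>) < r / 12"
        have "Em m \<le> 6 * (LINT \<omega>|M m. (W m \<omega>)\<^sup>2 * indicator {\<omega>. \<bar>W m \<omega>\<bar> \<ge> e * sqrt (real (K m))} \<omega>) + \<bar>t\<bar> * e"
          unfolding Em_def by (rule prob_space.lind_bound(1)[OF prob Wf(1) Wf(2) Wf(3) e Kpos])
        then show "Em m < r" using h te by linarith
      qed
    qed
    have evK: "eventually (\<lambda>m. t\<^sup>2 / 4 \<le> real (K m)) sequentially" using Kr_top unfolding filterlim_at_top by blast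
    have cb: "eventually (\<lambda>m. norm (char (distr (M m) borel (Z m)) t - complex_of_real ((1 + (-(t\<^sup>2) / 2) / real (K m)) ^ K m))
                 \<le> t\<^sup>2 / 6 * Em m) sequentially"
      using evK
    proof (rule eventually_mono)
      fix m assume Kt: "t\<^sup>2 / 4 \<le> real (K m)"
      show "norm (char (distr (M m) borel (Z m)) t - complex_of_real ((1 + (-(t\<^sup>2) / 2) / real (K m)) ^ K m)) \<le> t\<^sup>2 / 6 * Em m"
        using jrow.char_bound[OF row[of m] Kt]
        by (simp add: sv1 sv2 Z_def[abs_def] B_def s1_def s2_def Em_def W_def mult.assoc)
    qed
    have lim1: "(\<lambda>m. (1 + (-(t\<^sup>2) / 2) / real (K m)) ^ K m) \<longlonglongrightarrow> exp (-(t\<^sup>2) / 2)"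
      by (rule filterlim_compose[OF tendsto_exp_limit_sequentially K_inf])
    have lim2: "(\<lambda>m. complex_of_real ((1 + (-(t\<^sup>2) / 2) / real (K m)) ^ K m)) \<longlonglongrightarrow> complex_of_real (exp (-(t\<^sup>2) / 2))"
      by (rule tendsto_of_real[OF lim1])
    have lim3: "(\<lambda>m. t\<^sup>2 / 6 * Em m) \<longlonglongrightarrow> 0" using tendsto_mult_right_zero[OF Em] by simp
    have "(\<lambda>m. char (distr (M m) borel (Z m)) t) \<longlonglongrightarrow> complex_of_real (exp (-(t\<^sup>2) / 2))"
      by (rule Lim_transform[OF lim2 Lim_null_comparison[OF cb lim3]])
    then show "(\<lambda>m. char (distr (M m) borel (Z m)) t) \<longlonglongrightarrow> char NN t"
      by (simp add: char_std_normal_distribution)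
  qed
  have Zconv: "(\<lambda>m. measure (M m) {\<omega> \<in> space (M m). \<bar>Z m \<omega>\<bar> \<le> x}) \<longlonglongrightarrow> GG x" if x: "x \<ge> 0" for x
  proof -
    have "(\<lambda>m. measure (distr (M m) borel (Z m)) {-x..x}) \<longlonglongrightarrow> GG x"
      by (rule GG_conv[OF _ wc x]) (rule prob_space.real_distribution_distr[OF prob Zm])
    moreover have "measure (distr (M m) borel (Z m)) {-x..x} = measure (M m) {\<omega> \<in> space (M m). \<bar>Z m \<omega>\<bar> \<le> x}" for m
    proof -
      have "measure (distr (M m) borel (Z m)) {-x..x} = measure (M m) (Z m -` {-x..x} \<inter> space (M m))"
        by (rule measure_distr[OF Zm]) simp
      also have "Z m -` {-x..x} \<inter> space (M m) = {\<omega> \<in> space (M m). \<bar>Z m \<omega>\<bar> \<le> x}" by auto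
      finally show ?thesis .
    qed
    ultimately show ?thesis by simp
  qed
  define E where "E m = {\<omega> \<in> space (M m). in_CI K \<beta> fs eta eps sh_eta sh_eps q m \<omega>}" for m
  define pV where "pV \<delta> m = measure (M m) {\<omega> \<in> space (M m). \<delta> * (sqrt (real (K m)) * s1 m * s2 m) \<le> \<bar>A m \<omega>\<bar>}" for \<delta> m
  define p1 where "p1 \<delta> m = measure (M m) {\<omega> \<in> space (M m). \<delta> / 3 < \<bar>sh_eta m \<omega> / s1 m - 1\<bar>}" for \<delta> m
  define p2 where "p2 \<delta> m = measure (M m) {\<omega> \<in> space (M m). \<delta> / 3 < \<bar>sh_eps m \<omega> / s2 m - 1\<bar>}" for \<delta> m
  define PZ where "PZ x m = measure (M m) {\<omega> \<in> space (M m). \<bar>Z m \<omega>\<bar> \<le> x}" for x m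
  have pV: "pV \<delta> \<longlonglongrightarrow> 0" if d: "\<delta> > 0" for \<delta>
  proof (rule to0)
    show "0 \<le> pV \<delta> m" for m by (simp add: pV_def)
    show "eventually (\<lambda>m. pV \<delta> m \<le> l5 m / \<delta>\<^sup>2) sequentially"
    proof (rule always_eventually, rule allI)
      fix m
      have t: "\<delta> * (sqrt (real (K m)) * s1 m * s2 m) > 0" using d s1pos[of m] s2pos[of m] Kpos[of m] by simp
      have "pV \<delta> m \<le> Pi m * (s2 m)\<^sup>2 / (\<delta> * (sqrt (real (K m)) * s1 m * s2 m))\<^sup>2"
        unfolding pV_def by (rule cheb(1)[OF t])
      also have "\<dots> = l5 m / \<delta>\<^sup>2" using d s1pos[of m] s2pos[of m] Kpos[of m]
        by (simp add: l5_def field_simps power2_eq_square)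
      finally show "pV \<delta> m \<le> l5 m / \<delta>\<^sup>2" .
    qed
    show "(\<lambda>m. l5 m / \<delta>\<^sup>2) \<longlonglongrightarrow> 0" using tendsto_divide[OF l5 tendsto_const[of "\<delta>\<^sup>2"]] d by simp
  qed
  have p1: "p1 \<delta> \<longlonglongrightarrow> 0" if d: "\<delta> > 0" for \<delta>
    using spec[OF cons_eta[unfolded conv_in_prob_def], of "\<delta> / 3"] d unfolding p1_def[abs_def] s1_def by simp
  have p2: "p2 \<delta> \<longlonglongrightarrow> 0" if d: "\<delta> > 0" for \<delta>
    using spec[OF cons_eps[unfolded conv_in_prob_def], of "\<delta> / 3"] d unfolding p2_def[abs_def] s2_def by simp
  have bounds: "measure (M m) (E m) \<le> PZ (q * (1 + \<delta>) + \<delta>) m + (pC m + pD m + pV \<delta> m + p1 \<delta> m + p2 \<delta> m)"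
     "PZ (q * (1 - \<delta>) - \<delta>) m \<le> measure (M m) (E m) + (pC m + pD m + pV \<delta> m + p1 \<delta> m + p2 \<delta> m)"
    if P: "Pi m > 0" and d: "0 < \<delta>" "\<delta> \<le> 1" for m \<delta>
  proof -
    interpret r: prob_space "M m" by (rule prob)
    note [measurable] = measA[of m] Zm[of m] meas_sh_eta[of m] meas_sh_eps[of m]
    let ?Bad = "{\<omega> \<in> space (M m). Pi m / 4 \<le> \<bar>C m \<omega>\<bar>} \<union> {\<omega> \<in> space (M m). Pi m / 4 \<le> \<bar>D m \<omega>\<bar>}
      \<union> {\<omega> \<in> space (M m). \<delta> * (sqrt (real (K m)) * s1 m * s2 m) \<le> \<bar>A m \<omega>\<bar>}
      \<union> {\<omega> \<in> space (M m). \<delta> / 3 < \<bar>sh_eta m \<omega> / s1 m - 1\<bar>} \<union> {\<omega> \<in> space (M m). \<delta> / 3 < \<bar>sh_eps m \<omega> / s2 m - 1\<bar>}"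
    have Bad_s: "?Bad \<in> sets (M m)" by measurable
    have Bad_m: "measure (M m) ?Bad \<le> pC m + pD m + pV \<delta> m + p1 \<delta> m + p2 \<delta> m"
      unfolding pC_def pD_def pV_def p1_def p2_def by (rule measure_Un5) measurable
    have Eeq: "E m = {\<omega> \<in> space (M m). \<bar>\<beta> - (\<beta> * (Pi m + C m \<omega> + D m \<omega>) + A m \<omega> + B m \<omega>) / (Pi m + C m \<omega> + D m \<omega>)\<bar>
        \<le> \<bar>q * inverse ((Pi m + C m \<omega> + D m \<omega>) / sqrt (real (K m))) * sh_eta m \<omega> * sh_eps m \<omega>\<bar>}"
      by (simp add: E_def in_CI_def bh_eq den_eq)
    have E_s: "E m \<in> sets (M m)" unfolding Eeq by measurable
    have Zeq: "Z m \<omega> = B m \<omega> / (sqrt (real (K m)) * s1 m * s2 m)" for \<omega> by (simp add: Z_def)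
    have c: "sqrt (real (K m)) > 0" using Kpos[of m] by simp
    have good: "\<bar>C m \<omega>\<bar> < Pi m / 4" "\<bar>D m \<omega>\<bar> < Pi m / 4" "\<bar>A m \<omega>\<bar> < \<delta> * (sqrt (real (K m)) * s1 m * s2 m)"
        "\<bar>sh_eta m \<omega> / s1 m - 1\<bar> \<le> \<delta> / 3" "\<bar>sh_eps m \<omega> / s2 m - 1\<bar> \<le> \<delta> / 3"
      if "\<omega> \<in> space (M m)" "\<omega> \<notin> ?Bad" for \<omega>
      using that by auto
    have "E m \<subseteq> {\<omega> \<in> space (M m). \<bar>Z m \<omega>\<bar> \<le> q * (1 + \<delta>) + \<delta>} \<union> ?Bad"
    proof
      fix \<omega> assume w: "\<omega> \<in> E m"
      then have ws: "\<omega> \<in> space (M m)" by (simp add: E_def)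
      show "\<omega> \<in> {\<omega> \<in> space (M m). \<bar>Z m \<omega>\<bar> \<le> q * (1 + \<delta>) + \<delta>} \<union> ?Bad"
      proof (cases "\<omega> \<in> ?Bad")
        case False
        note g = good[OF ws False]
        have inq: "\<bar>\<beta> - (\<beta> * (Pi m + C m \<omega> + D m \<omega>) + A m \<omega> + B m \<omega>) / (Pi m + C m \<omega> + D m \<omega>)\<bar>
            \<le> \<bar>q * inverse ((Pi m + C m \<omega> + D m \<omega>) / sqrt (real (K m))) * sh_eta m \<omega> * sh_eps m \<omega>\<bar>"
          using w unfolding Eeq mem_Collect_eq by blast
        have "\<bar>Z m \<omega>\<bar> \<le> q * (1 + \<delta>) + \<delta>"
          unfolding Zeq by (rule ptw(1)[OF P g(1,2) c s1pos s2pos d q g(3,4,5), where \<beta>=\<beta> and B="B m \<omega>", OF inq])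
        then show ?thesis using ws by simp
      qed simp
    qed
    then have "measure (M m) (E m) \<le> measure (M m) ({\<omega> \<in> space (M m). \<bar>Z m \<omega>\<bar> \<le> q * (1 + \<delta>) + \<delta>} \<union> ?Bad)"
      by (intro r.finite_measure_mono) (use Bad_s in measurable)
    also have "\<dots> \<le> PZ (q * (1 + \<delta>) + \<delta>) m + measure (M m) ?Bad"
      unfolding PZ_def by (rule measure_Un_le) (use Bad_s in measurable)
    finally show "measure (M m) (E m) \<le> PZ (q * (1 + \<delta>) + \<delta>) m + (pC m + pD m + pV \<delta> m + p1 \<delta> m + p2 \<delta> m)"
      using Bad_m by linarith
    have "{\<omega> \<in> space (M m). \<bar>Z m \<omega>\<bar> \<le> q * (1 - \<delta>) - \<delta>} \<subseteq> E m \<union> ?Bad"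
    proof
      fix \<omega> assume w: "\<omega> \<in> {\<omega> \<in> space (M m). \<bar>Z m \<omega>\<bar> \<le> q * (1 - \<delta>) - \<delta>}"
      then have ws: "\<omega> \<in> space (M m)" and z: "\<bar>Z m \<omega>\<bar> \<le> q * (1 - \<delta>) - \<delta>" by auto
      show "\<omega> \<in> E m \<union> ?Bad"
      proof (cases "\<omega> \<in> ?Bad")
        case False
        note g = good[OF ws False]
        have "\<bar>\<beta> - (\<beta> * (Pi m + C m \<omega> + D m \<omega>) + A m \<omega> + B m \<omega>) / (Pi m + C m \<omega> + D m \<omega>)\<bar>
            \<le> \<bar>q * inverse ((Pi m + C m \<omega> + D m \<omega>) / sqrt (real (K m))) * sh_eta m \<omega> * sh_eps m \<omega>\<bar>"
          by (rule ptw(2)[OF P g(1,2) c s1pos s2pos d q g(3,4,5), where \<beta>=\<beta> and B="B m \<omega>"]) (use z in \<open>simp add: Zeq\<close>)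
        then have "\<omega> \<in> E m" using ws unfolding Eeq by blast
        then show ?thesis by simp
      qed simp
    qed
    then have "PZ (q * (1 - \<delta>) - \<delta>) m \<le> measure (M m) (E m \<union> ?Bad)"
      unfolding PZ_def by (intro r.finite_measure_mono) (use Bad_s E_s in auto)
    also have "\<dots> \<le> measure (M m) (E m) + measure (M m) ?Bad"
      by (rule measure_Un_le[OF E_s Bad_s])
    finally show "PZ (q * (1 - \<delta>) - \<delta>) m \<le> measure (M m) (E m) + (pC m + pD m + pV \<delta> m + p1 \<delta> m + p2 \<delta> m)"
      using Bad_m by linarith
  qed
  have cov: "(\<lambda>m. measure (M m) (E m)) \<longlonglongrightarrow> 1 - \<alpha>"
    unfolding tendsto_iff dist_real_def
  proof (intro allI impI)
    fix r :: real assume r: "r > 0"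
    have GGq: "GG q = 1 - \<alpha>" by (rule GG_q[OF quantile alpha])
    obtain d where d: "d > 0" and dd: "\<And>y. y \<noteq> q \<Longrightarrow> norm (y - q) < d \<Longrightarrow> norm (GG y - GG q) < r / 4"
      using LIM_D[OF GG_cont[OF q, unfolded isCont_def], of "r / 4"] r by auto
    have dd': "\<bar>GG y - GG q\<bar> < r / 4" if "\<bar>y - q\<bar> < d" for y
      using dd[of y] that r by (cases "y = q") auto
    define \<delta> where "\<delta> = min (1/2) (min d q / (2 * (q + 1)))"
    have mdq: "min d q > 0" using d q by simp
    have \<delta>: "0 < \<delta>" "\<delta> \<le> 1" using mdq q by (auto simp: \<delta>_def)
    have \<delta>q: "\<delta> * (q + 1) \<le> min d q / 2"
    proof -
      have "\<delta> \<le> min d q / (2 * (q + 1))" by (simp add: \<delta>_def)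
      then have "\<delta> * (q + 1) \<le> min d q / (2 * (q + 1)) * (q + 1)" using q by (intro mult_right_mono) auto
      also have "\<dots> = min d q / 2" using q by (simp add: field_simps)
      finally show ?thesis .
    qed
    define xp where "xp = q * (1 + \<delta>) + \<delta>"
    define xm where "xm = q * (1 - \<delta>) - \<delta>"
    have e1: "\<delta> * (q + 1) < d" using \<delta>q mdq by (simp add: min_def split: if_splits)
    have e2: "\<delta> * (q + 1) \<le> q / 2" using \<delta>q mdq q by (simp add: min_def split: if_splits)
    have e3: "\<delta> * (q + 1) > 0" using \<delta> q by simp
    have xpe: "xp - q = \<delta> * (q + 1)" by (simp add: xp_def algebra_simps)
    have xme: "xm - q = - (\<delta> * (q + 1))" by (simp add: xm_def algebra_simps)
    have xpd: "\<bar>xp - q\<bar> < d" and xmd: "\<bar>xm - q\<bar> < d" and xm0: "xm \<ge> 0" and xp0: "xp \<ge> 0"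
      unfolding xpe xme using e1 e2 e3 q xpe xme by auto
    have Gp: "\<bar>GG xp - (1 - \<alpha>)\<bar> < r / 4" using dd'[OF xpd] GGq by simp
    have Gm: "\<bar>GG xm - (1 - \<alpha>)\<bar> < r / 4" using dd'[OF xmd] GGq by simp
    have sum0: "(\<lambda>m. pC m + pD m + pV \<delta> m + p1 \<delta> m + p2 \<delta> m) \<longlonglongrightarrow> 0"
      using tendsto_add[OF tendsto_add[OF tendsto_add[OF tendsto_add[OF pC pD] pV[OF \<delta>(1)]] p1[OF \<delta>(1)]] p2[OF \<delta>(1)]] by simp
    have ev2: "eventually (\<lambda>m. pC m + pD m + pV \<delta> m + p1 \<delta> m + p2 \<delta> m < r / 4) sequentially"
      by (rule order_tendstoD(2)[OF sum0]) (use r in simp)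
    have ev3: "eventually (\<lambda>m. \<bar>PZ xp m - GG xp\<bar> < r / 4) sequentially"
    proof -
      have "r / 4 > 0" using r by simp
      from Zconv[OF xp0, unfolded tendsto_iff dist_real_def, rule_format, OF this]
      show ?thesis unfolding PZ_def .
    qed
    have ev4: "eventually (\<lambda>m. \<bar>PZ xm m - GG xm\<bar> < r / 4) sequentially"
    proof -
      have "r / 4 > 0" using r by simp
      from Zconv[OF xm0, unfolded tendsto_iff dist_real_def, rule_format, OF this]
      show ?thesis unfolding PZ_def .
    qed
    show "eventually (\<lambda>m. \<bar>measure (M m) (E m) - (1 - \<alpha>)\<bar> < r) sequentially"
      using ev_Pi ev2 ev3 ev4
    proof eventually_elim
      case (elim m)
      have u: "measure (M m) (E m) \<le> PZ xp m + (pC m + pD m + pV \<delta> m + p1 \<delta> m + p2 \<delta> m)"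
        using bounds(1)[OF elim(1) \<delta>] by (simp add: xp_def)
      have l: "PZ xm m \<le> measure (M m) (E m) + (pC m + pD m + pV \<delta> m + p1 \<delta> m + p2 \<delta> m)"
        using bounds(2)[OF elim(1) \<delta>] by (simp add: xm_def)
      have nn: "0 \<le> pC m + pD m + pV \<delta> m + p1 \<delta> m + p2 \<delta> m"
        by (simp add: pC_def pD_def pV_def p1_def p2_def)
      show ?case using u l nn elim(2,3,4) Gp Gm unfolding abs_less_iff by linarith
    qed
  qed
  show ?thesis using cov cons by (simp add: E_def)
qed

end
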